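(* Consider the following two-phase MIX communication protocol between a single receiver $R$ and $v$ senders, run over $(t+1)^2$ distinct MIX servers organised into $t+1$ pairwise disjoint blocks $B_1,\dots,B_{t+1}$, where $B_k=\{MIX_{k,1},\dots,MIX_{k,t+1}\}$ and $MIX_{k,1}$ is called the leader of $B_k$ (so every MIX server belongs to exactly one block and is used in exactly one mixing step). Private channels connect $R$ with each server of $B_1$, each server of $B_k$ with each server of $B_{k+1}$ ($k\le t$), and each server of $B_{t+1}$ with each sender. Phase A (receiver to senders). $R$ has one-time pads $\pi^1_1,\dots,\pi^1_v\in\mathbb{F}_{2^l}$. For each $i$, $R$ splits $\pi^1_i$ into $t+1$ shares $\pi^1_{i,1},\dots,\pi^1_{i,t+1}\in\mathbb{F}_{2^l}$ (uniformly random subject to their XOR being $\pi^1_i$) and privately sends $\pi^1_{i,j}$ to $MIX_{1,j}$. Then for $k=1,\dots,t+1$: the leader of $B_k$ chooses a uniformly random permutation $\rho_k\in S_v$ and tells it to all servers in $B_k$, who reindex their shares by $\pi^k_{i,j}:=\pi^k_{\rho_k(i),j}$; the leader of $B_k$ chooses uniformly random modifiers $\omega^k_{i,j}\in\mathbb{F}_{2^l}$ and privately sends $\omega^k_{i,j}$ to $MIX_{k,j}$; each $MIX_{k,j}$ computes $\pi^{k+1}_{i,j}=\omega^k_{i,j}+\pi^k_{i,j}$ (addition in $\mathbb{F}_{2^l}$, i.e. XOR) and, if $k\le t$, sends $\pi^{k+1}_{i,j}$ to $MIX_{k+1,j}$. Finally, denoting the shares held by $MIX_{t+1,j}$ by $\phi_{i,j}$,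 $MIX_{t+1,j}$ sends $\phi_{i,j}$ to the $i$-th sender, who XORs the $t+1$ received shares to obtain its (permuted and modified) pad. Phase B (senders to receiver). Each sender XORs its secret message with the pad it reconstructed and sends the result to the leader of $B_{t+1}$; the ciphertexts are then passed back from leader to leader ($B_{t+1}$ to $B_t$ to $\dots$ to $B_1$ to $R$), each leader of $B_k$ undoing its step by removing (XORing) the modifiers $\omega^k_i=\bigoplus_j\omega^k_{i,j}$ and applying the inverse permutation $\rho_k^{-1}$; $R$ recovers each message by XORing with the corresponding original pad. Suppose the adversary is passive (it only observes, never deviates from the protocol), computationally unbounded, and controls (sees the complete view of) at most $t$ MIX servers. Then this protocol is a perfectly reliable, perfectly private and perfectly anonymous message transmission protocol.
   Context: Perfectly reliable: every transmitted message is received by its intended recipient with probability 1. Perfectly private: for any coalition of at most $t$ corrupted parties, their probability of correctly determining any transmitted message (pad or sender's secret) is the same whether or not they are given their view of the protocol. Perfectly anonymous: for any coalition of at most $t$ corrupted parties, their probability of correctly determining which sender sent (respectively received) any given message is the same whether or not they are given their view of the protocol. *)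

theory Defs
  imports "HOL-Probability.Probability" "HOL-Combinatorics.Permutations"
begin

text \<open>Field elements of F_(2^l) are the elements
 of an arbitrary finite field 'f of characteristic 2 (these are exactly the fields F_(2^l));
 field addition is XOR.  Indices are 0-based: senders/slots i < v, blocks k <= t,
 positions in a block j <= t; server (k,0) is the leader of block k.
 Vectors are functions nat => 'f (value 0 outside the index range).\<close>

record 'f coins =
  pad    :: "nat \<Rightarrow> 'f"
  share  :: "nat \<Rightarrow> nat \<Rightarrow> 'f"
  perm   :: "nat \<Rightarrow> nat \<Rightarrow> nat"
  modif  :: "nat \<Rightarrow> nat \<Rightarrow> nat \<Rightarrow> 'f"
  secret :: "nat \<Rightarrow> 'f"

definition share_set :: "nat \<Rightarrow> 'f::field \<Rightarrow> (nat \<Rightarrow> 'f) set" where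
  "share_set t p = {s. (\<forall>j>t. s j = 0) \<and> (\<Sum>j\<le>t. s j) = p}"

definition coins_pmf :: "nat \<Rightarrow> nat \<Rightarrow> (nat \<Rightarrow> 'f::{finite,field}) pmf \<Rightarrow> 'f coins pmf" where
  "coins_pmf v t Mdist =
     do {
       P \<leftarrow> Pi_pmf {..<v} 0 (\<lambda>_. pmf_of_set UNIV);
       S \<leftarrow> Pi_pmf {..<v} (\<lambda>_. 0) (\<lambda>i. pmf_of_set (share_set t (P i)));
       rho \<leftarrow> Pi_pmf {..t} id (\<lambda>_. pmf_of_set {p. p permutes {..<v}});
       omega \<leftarrow> Pi_pmf {..t} (\<lambda>_ _. 0)
                  (\<lambda>_. Pi_pmf {..<v} (\<lambda>_. 0) (\<lambda>_. Pi_pmf {..t} 0 (\<lambda>_. pmf_of_set UNIV)));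
       M \<leftarrow> Mdist;
       return_pmf \<lparr>pad = P, share = S, perm = rho, modif = omega, secret = M\<rparr>
     }"

text \<open>sh c k i j: share held (before reindexing) by server MIX_(k,j) for index i, i.e. pi^(k)_(i,j);
 sh c (Suc t) i j is phi_(i,j), the share sent to sender i.\<close>
primrec sh :: "('f::field) coins \<Rightarrow> nat \<Rightarrow> nat \<Rightarrow> nat \<Rightarrow> 'f" where
  "sh c 0 = share c"
| "sh c (Suc k) = (\<lambda>i j. modif c k i j + sh c k (perm c k i) j)"

definition sender_pad :: "nat \<Rightarrow> ('f::field) coins \<Rightarrow> nat \<Rightarrow> 'f" where
  "sender_pad t c i = (\<Sum>j\<le>t. sh c (Suc t) i j)"

definition Omega :: "nat \<Rightarrow> ('f::field) coins \<Rightarrow> nat \<Rightarrow> nat \<Rightarrow> 'f" where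
  "Omega t c k i = (\<Sum>j\<le>t. modif c k i j)"

text \<open>Phase B.  bwd v t c m is the ciphertext vector at level Suc t - m: level Suc t is what
 the senders send to the leader of block t; the leader of block k turns the vector of level
 Suc k into the vector of level k; level 0 is delivered to R.\<close>
primrec bwd :: "nat \<Rightarrow> nat \<Rightarrow> ('f::field) coins \<Rightarrow> nat \<Rightarrow> nat \<Rightarrow> 'f" where
  "bwd v t c 0 = (\<lambda>i. if i < v then secret c i + sender_pad t c i else 0)"
| "bwd v t c (Suc m) =
     (\<lambda>a. if a < v then
             bwd v t c m (inv_into {..<v} (perm c (t - m)) a)
             + Omega t c (t - m) (inv_into {..<v} (perm c (t - m)) a)
           else 0)"

definition cipher_level :: "nat \<Rightarrow> nat \<Rightarrow> ('f::field) coins \<Rightarrow> nat \<Rightarrow> nat \<Rightarrow> 'f" where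
  "cipher_level v t c k = bwd v t c (Suc t - k)"

definition received :: "nat \<Rightarrow> nat \<Rightarrow> ('f::field) coins \<Rightarrow> nat \<Rightarrow> 'f" where
  "received v t c a = cipher_level v t c 0 a + pad c a"

text \<open>Overall routing: sender i obtains the pad of slot rho_0(rho_1(...rho_t(i))).\<close>
primrec comp_perm :: "'f coins \<Rightarrow> nat \<Rightarrow> nat \<Rightarrow> nat" where
  "comp_perm c 0 = id"
| "comp_perm c (Suc n) = comp_perm c n \<circ> perm c n"

text \<open>The sender that receives R's pad of slot a (and hence whose message R recovers in slot a).\<close>
definition sender_of :: "nat \<Rightarrow> nat \<Rightarrow> 'f coins \<Rightarrow> nat \<Rightarrow> nat" where
  "sender_of v t c a = inv_into {..<v} (comp_perm c (Suc t)) a"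

definition viewA :: "nat \<Rightarrow> nat \<Rightarrow> ('f::field) coins \<Rightarrow> nat \<times> nat \<Rightarrow>
    (nat \<Rightarrow> 'f) \<times> (nat \<Rightarrow> nat) \<times> (nat \<Rightarrow> 'f) \<times> (nat \<Rightarrow> nat \<Rightarrow> 'f) option" where
  "viewA v t c s = (case s of (k, j) \<Rightarrow>
     ((\<lambda>i. if i < v then sh c k i j else 0),
      perm c k,
      (\<lambda>i. if i < v then modif c k i j else 0),
      (if j = 0 then Some (\<lambda>i j'. if i < v \<and> j' \<le> t then modif c k i j' else 0) else None)))"

definition viewAB :: "nat \<Rightarrow> nat \<Rightarrow> ('f::field) coins \<Rightarrow> nat \<times> nat \<Rightarrow>
    ((nat \<Rightarrow> 'f) \<times> (nat \<Rightarrow> nat) \<times> (nat \<Rightarrow> 'f) \<times> (nat \<Rightarrow> nat \<Rightarrow> 'f) option) \<times> (nat \<Rightarrow> 'f) option" where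
  "viewAB v t c s = (viewA v t c s,
     (case s of (k, j) \<Rightarrow> if j = 0 then Some (cipher_level v t c (Suc k)) else None))"

definition coalition_view :: "(nat \<times> nat) set \<Rightarrow> (nat \<times> nat \<Rightarrow> 'w) \<Rightarrow> nat \<times> nat \<Rightarrow> 'w option" where
  "coalition_view C V = (\<lambda>s. if s \<in> C then Some (V s) else None)"

text \<open>Probability of correctly determining X from information W (computationally unbounded
 guesser g), for a joint distribution J of (W, X).\<close>
definition guess_prob :: "('w \<times> 'x) pmf \<Rightarrow> real" where
  "guess_prob J = (SUP g. measure_pmf.prob J {p. g (fst p) = snd p})"

definition view_useless :: "'c pmf \<Rightarrow> ('c \<Rightarrow> 'w) \<Rightarrow> ('c \<Rightarrow> 'x) \<Rightarrow> bool" where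
  "view_useless D W X \<longleftrightarrow>
     guess_prob (map_pmf (\<lambda>c. (W c, X c)) D) = guess_prob (map_pmf (\<lambda>c. ((), X c)) D)"

end

theory Submission
  imports Defs
begin

lemma emeasure_pair_guess:
  "emeasure (measure_pmf (pair_pmf Q1 Q2)) {p. g (fst p) = snd p} = (\<integral>\<^sup>+ a. ennreal (pmf Q2 (g a)) \<partial>Q1)"
proof -
  have "pair_pmf Q1 Q2 = bind_pmf Q1 (\<lambda>x. map_pmf (Pair x) Q2)"
    by (simp add: pair_pmf_def map_pmf_def)
  moreover have "emeasure (measure_pmf (map_pmf (Pair x) Q2)) {p. g (fst p) = snd p} = ennreal (pmf Q2 (g x))" for x
    by (simp add: emeasure_pmf_single vimage_def eq_commute)
  ultimately show ?thesis by simp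
qed

lemma guess_prob_pair: "guess_prob (pair_pmf Q1 Q2) = (SUP x. pmf Q2 x)"
proof -
  have bdd: "bdd_above (range (pmf Q2))" by (auto intro!: bdd_aboveI[where M=1] pmf_le_1)
  have up: "measure_pmf.prob (pair_pmf Q1 Q2) {p. g (fst p) = snd p} \<le> (SUP x. pmf Q2 x)" for g
  proof -
    have "emeasure (measure_pmf (pair_pmf Q1 Q2)) {p. g (fst p) = snd p} \<le> (\<integral>\<^sup>+ a. ennreal (SUP x. pmf Q2 x) \<partial>Q1)"
      unfolding emeasure_pair_guess
      by (intro nn_integral_mono ennreal_leI cSUP_upper bdd) auto
    also have "\<dots> = ennreal (SUP x. pmf Q2 x)"
      by (simp add: measure_pmf.emeasure_space_1)
    finally have "ennreal (measure_pmf.prob (pair_pmf Q1 Q2) {p. g (fst p) = snd p}) \<le> ennreal (SUP x. pmf Q2 x)"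
      by (simp add: measure_pmf.emeasure_eq_measure)
    moreover have "0 \<le> (SUP x. pmf Q2 x)" by (meson cSUP_upper2[OF bdd] pmf_nonneg UNIV_I)
    ultimately show ?thesis by (simp add: ennreal_le_iff)
  qed
  have lo: "pmf Q2 x = measure_pmf.prob (pair_pmf Q1 Q2) {p. (\<lambda>_. x) (fst p) = snd p}" for x
  proof -
    have "emeasure (measure_pmf (pair_pmf Q1 Q2)) {p. (\<lambda>_. x) (fst p) = snd p} = ennreal (pmf Q2 x)"
      using emeasure_pair_guess[of Q1 Q2 "\<lambda>_. x"] by (simp add: measure_pmf.emeasure_space_1)
    thus ?thesis by (simp add: measure_pmf.emeasure_eq_measure)
  qed
  have bdd2: "bdd_above (range (\<lambda>g. measure_pmf.prob (pair_pmf Q1 Q2) {p. g (fst p) = snd p}))"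
    by (auto intro!: bdd_aboveI[where M=1])
  show ?thesis unfolding guess_prob_def
  proof (rule antisym)
    show "(SUP g. measure_pmf.prob (pair_pmf Q1 Q2) {p. g (fst p) = snd p}) \<le> (SUP x. pmf Q2 x)"
      by (rule cSUP_least) (auto intro: up)
    show "(SUP x. pmf Q2 x) \<le> (SUP g. measure_pmf.prob (pair_pmf Q1 Q2) {p. g (fst p) = snd p})"
      by (rule cSUP_least) (auto simp: lo intro!: cSUP_upper bdd2)
  qed
qed

lemma view_useless_pair:
  assumes "map_pmf (\<lambda>c. (W c, X c)) D = pair_pmf Q1 Q2"
  shows "view_useless D W X"
proof -
  have "map_pmf X D = Q2"
    using arg_cong[OF assms, of "map_pmf snd"] by (simp add: map_pmf_comp map_snd_pair_pmf)
  hence "map_pmf (\<lambda>c. ((), X c)) D = pair_pmf (return_pmf ()) Q2"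
    by (simp add: pair_return_pmf1 map_pmf_comp[symmetric, of "Pair ()" X, unfolded o_def])
  thus ?thesis using assms unfolding view_useless_def by (simp add: guess_prob_pair)
qed

lemma mix_lemma:
  assumes "\<And>m. m \<in> set_pmf M \<Longrightarrow> map_pmf (F m) B = pair_pmf (Q1 m) Q2"
  shows "map_pmf (\<lambda>(b, m). F m b) (pair_pmf B M) = pair_pmf (bind_pmf M Q1) Q2"
proof -
  have "map_pmf (\<lambda>(b, m). F m b) (pair_pmf B M) = bind_pmf M (\<lambda>m. map_pmf (F m) B)"
    by (subst pair_commute_pmf) (simp add: pair_pmf_def map_pmf_def bind_assoc_pmf bind_return_pmf)
  also have "\<dots> = bind_pmf M (\<lambda>m. pair_pmf (Q1 m) Q2)"
    by (rule bind_pmf_cong) (simp_all add: assms)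
  also have "\<dots> = pair_pmf (bind_pmf M Q1) Q2"
    by (simp add: pair_pmf_def bind_assoc_pmf)
  finally show ?thesis .
qed

lemma core_lemma:
  assumes "\<And>m. m \<in> set_pmf M \<Longrightarrow> map_pmf (W m) B = Q"
  shows "map_pmf (\<lambda>(b, m). (W m b, X m)) (pair_pmf B M) = pair_pmf Q (map_pmf X M)"
proof -
  have "map_pmf (\<lambda>(b, m). (W m b, X m)) (pair_pmf B M) = bind_pmf M (\<lambda>m. map_pmf (\<lambda>w. (w, X m)) (map_pmf (W m) B))"
    by (subst pair_commute_pmf) (simp add: pair_pmf_def map_pmf_def bind_assoc_pmf bind_return_pmf)
  also have "\<dots> = bind_pmf M (\<lambda>m. map_pmf (\<lambda>w. (w, X m)) Q)"
    by (rule bind_pmf_cong) (simp_all add: assms)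
  also have "\<dots> = pair_pmf Q (map_pmf X M)"
    by (subst pair_commute_pmf) (simp add: pair_pmf_def map_pmf_def bind_assoc_pmf bind_return_pmf)
  finally show ?thesis .
qed

lemma pair_pmf_of_set:
  assumes "finite A" "A \<noteq> {}" "finite B" "B \<noteq> {}"
  shows "pair_pmf (pmf_of_set A) (pmf_of_set B) = pmf_of_set (A \<times> B)"
proof (rule pmf_eqI)
  fix i :: "'a \<times> 'b"
  show "pmf (pair_pmf (pmf_of_set A) (pmf_of_set B)) i = pmf (pmf_of_set (A \<times> B)) i"
    by (cases i) (simp add: assms pmf_pair card_cartesian_product split: split_indicator)
qed

lemma sym_indep:
  fixes W :: "'b \<Rightarrow> 'w" and X :: "'b \<Rightarrow> 'x"
  assumes B: "finite B" "B \<noteq> {}" and Xs: "finite Xs" "Xs \<noteq> {}"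
    and XB: "\<And>b. b \<in> B \<Longrightarrow> X b \<in> Xs"
    and sym: "\<And>x x'. x \<in> Xs \<Longrightarrow> x' \<in> Xs \<Longrightarrow> \<exists>\<phi>. bij_betw \<phi> B B \<and> (\<forall>b\<in>B. W (\<phi> b) = W b)
                   \<and> (\<forall>b\<in>B. X b = x \<longrightarrow> X (\<phi> b) = x')"
  shows "map_pmf (\<lambda>b. (W b, X b)) (pmf_of_set B) = pair_pmf (map_pmf W (pmf_of_set B)) (pmf_of_set Xs)"
proof -
  define E where "E w x = {b\<in>B. W b = w \<and> X b = x}" for w x
  have finE: "finite (E w x)" for w x using B by (simp add: E_def)
  have le: "card (E w x) \<le> card (E w x')" if xs: "x \<in> Xs" "x' \<in> Xs" for w x x'
  proof -
    obtain \<phi> where \<phi>: "bij_betw \<phi> B B" "\<forall>b\<in>B. W (\<phi> b) = W b" "\<forall>b\<in>B. X b = x \<longrightarrow> X (\<phi> b) = x'"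
      using sym[OF xs] by blast
    have "inj_on \<phi> (E w x)" using \<phi>(1) by (rule inj_on_subset[OF bij_betw_imp_inj_on]) (auto simp: E_def)
    moreover have "\<phi> ` E w x \<subseteq> E w x'" using \<phi> bij_betwE[OF \<phi>(1)] by (auto simp: E_def)
    ultimately show ?thesis by (intro card_inj_on_le finE)
  qed
  have eq: "card (E w x) = card (E w x')" if "x \<in> Xs" "x' \<in> Xs" for w x x'
    using le[OF that, of w] le[OF that(2,1), of w] by simp
  have cardW: "card {b\<in>B. W b = w} = card Xs * card (E w x)" if "x \<in> Xs" for w x
  proof -
    have "{b\<in>B. W b = w} = (\<Union>y\<in>Xs. E w y)" using XB by (auto simp: E_def)
    hence "card {b\<in>B. W b = w} = card (\<Union>y\<in>Xs. E w y)" by (simp only:)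
    also have "\<dots> = (\<Sum>y\<in>Xs. card (E w y))"
      apply (rule card_UN_disjoint[OF Xs(1)])
      subgoal by (simp add: finE)
      subgoal by (auto simp: E_def) done
    also have "\<dots> = (\<Sum>y\<in>Xs. card (E w x))" by (rule sum.cong) (use eq that in blast)+
    finally show ?thesis by simp
  qed
  show ?thesis
  proof (rule pmf_eqI)
    fix i :: "'w \<times> 'x"
    obtain w x where i: "i = (w, x)" by (cases i)
    have l: "pmf (map_pmf (\<lambda>b. (W b, X b)) (pmf_of_set B)) i = card (E w x) / card B"
    proof -
      have "B \<inter> (\<lambda>b. (W b, X b)) -` {i} = E w x" by (auto simp: E_def i)
      thus ?thesis unfolding pmf_map by (simp add: measure_pmf_of_set B)
    qed
    have r: "pmf (pair_pmf (map_pmf W (pmf_of_set B)) (pmf_of_set Xs)) i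
          = card {b\<in>B. W b = w} / card B * (indicator Xs x / card Xs)"
    proof -
      have "B \<inter> W -` {w} = {b\<in>B. W b = w}" by auto
      thus ?thesis unfolding i pmf_pair pmf_map by (simp add: measure_pmf_of_set B Xs)
    qed
    show "pmf (map_pmf (\<lambda>b. (W b, X b)) (pmf_of_set B)) i = pmf (pair_pmf (map_pmf W (pmf_of_set B)) (pmf_of_set Xs)) i"
    proof (cases "x \<in> Xs")
      case True
      have "card Xs > 0" using Xs by auto
      thus ?thesis unfolding l r using True by (simp add: cardW[OF True, of w])
    next
      case False
      hence "E w x = {}" using XB by (auto simp: E_def)
      thus ?thesis unfolding l r using False by simp
    qed
  qed
qed

definition SH :: "nat \<Rightarrow> (nat \<Rightarrow> 'f::zero) set" where
  "SH t = {s. \<forall>j>t. s j = 0}"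

lemma SH_PiE: "SH t = PiE_dflt {..t} 0 (\<lambda>_. UNIV)"
  by (auto simp: SH_def PiE_dflt_def)

lemma finite_SH: "finite (SH t :: (nat \<Rightarrow> 'f::{zero,finite}) set)"
  unfolding SH_PiE by (rule finite_PiE_dflt) auto

lemma share_set_sub: "share_set t p \<subseteq> SH t"
  by (auto simp: share_set_def SH_def)

lemma finite_share_set: "finite (share_set t (p::'f::{field,finite}))"
  using finite_subset[OF share_set_sub finite_SH] .

definition dlt :: "'f::zero \<Rightarrow> nat \<Rightarrow> 'f" where "dlt p = (\<lambda>j. if j = 0 then p else 0)"

lemma share_set_shift: "share_set t p = (\<lambda>s j. s j + dlt p j) ` share_set t (0::'f::field)"
proof (intro equalityI subsetI)
  fix s assume s: "s \<in> share_set t p"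
  have "(\<lambda>j. s j - dlt p j) \<in> share_set t 0"
    using s by (auto simp: share_set_def dlt_def sum_subtractf)
  thus "s \<in> (\<lambda>s j. s j + dlt p j) ` share_set t 0"
    by (intro image_eqI[where x="\<lambda>j. s j - dlt p j"]) auto
next
  fix s assume "s \<in> (\<lambda>s j. s j + dlt p j) ` share_set t 0"
  then obtain s0 where "s0 \<in> share_set t 0" "s = (\<lambda>j. s0 j + dlt p j)" by blast
  thus "s \<in> share_set t p" by (auto simp: share_set_def dlt_def sum.distrib)
qed

lemma card_share_set: "card (share_set t (p::'f)) = card (share_set t (0::'f::field))"
proof -
  have "inj_on (\<lambda>s j. s j + dlt p j) (share_set t (0::'f))"
    by (rule inj_onI) (simp add: fun_eq_iff)
  hence "card ((\<lambda>s j. s j + dlt p j) ` share_set t (0::'f)) = card (share_set t (0::'f))"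
    by (rule card_image)
  thus ?thesis using share_set_shift[of t p] by simp
qed

lemma share_set_nonempty: "share_set t (p::'f::field) \<noteq> {}"
proof -
  have "dlt p \<in> share_set t p" by (auto simp: share_set_def dlt_def)
  thus ?thesis by blast
qed

lemma L0:
  "bind_pmf (pmf_of_set UNIV) (\<lambda>p. pmf_of_set (share_set t p)) = pmf_of_set (SH t :: (nat \<Rightarrow> 'f::{field,finite}) set)"
proof (rule pmf_eqI)
  fix s :: "nat \<Rightarrow> 'f"
  define N where "N = card (share_set t (0::'f))"
  have N0: "N > 0" unfolding N_def by (simp add: card_gt_0_iff finite_share_set share_set_nonempty)
  have SHne: "SH t \<noteq> ({}::(nat\<Rightarrow>'f) set)"
  proof -
    have "(\<lambda>_. 0) \<in> (SH t::(nat\<Rightarrow>'f) set)" by (simp add: SH_def)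
    thus ?thesis by blast
  qed
  have cN: "card (share_set t (p::'f)) = N" for p unfolding N_def by (rule card_share_set)
  have cSH: "card (SH t :: (nat \<Rightarrow> 'f) set) = CARD('f) * N"
  proof -
    have "SH t = (\<Union>p. share_set t (p::'f))" by (auto simp: SH_def share_set_def)
    hence "card (SH t :: (nat \<Rightarrow> 'f) set) = (\<Sum>p\<in>UNIV. card (share_set t (p::'f)))"
      by (simp only:) (rule card_UN_disjoint, simp_all add: finite_share_set, auto simp: share_set_def)
    also have "\<dots> = (\<Sum>p\<in>(UNIV::'f set). N)" by (rule sum.cong) (simp_all add: cN)
    finally show ?thesis by simp
  qed
  have "pmf (bind_pmf (pmf_of_set UNIV) (\<lambda>p. pmf_of_set (share_set t p))) s
      = (\<Sum>p\<in>UNIV. indicator (share_set t p) s / N) / CARD('f)"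
    by (simp add: pmf_bind integral_pmf_of_set finite_share_set share_set_nonempty cN sum_divide_distrib mult.commute)
  also have "\<dots> = indicator (SH t) s / card (SH t :: (nat \<Rightarrow> 'f) set)"
  proof (cases "s \<in> SH t")
    case True
    define p0 where "p0 = (\<Sum>j\<le>t. s j)"
    have "(\<Sum>p\<in>UNIV. indicator (share_set t p) s / N) = (\<Sum>p\<in>{p0}. indicator (share_set t p) s / N)"
      by (rule sum.mono_neutral_right) (auto simp: share_set_def p0_def)
    also have "\<dots> = 1 / N" using True by (simp add: share_set_def SH_def p0_def)
    finally show ?thesis using True by (simp add: cSH)
  next
    case False
    hence "s \<notin> share_set t p" for p using share_set_sub by blast
    thus ?thesis using False by simp
  qed
  finally show "pmf (bind_pmf (pmf_of_set UNIV) (\<lambda>p. pmf_of_set (share_set t p))) s = pmf (pmf_of_set (SH t)) s"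
    using SHne by (simp add: finite_SH)
qed

definition rowsum :: "nat \<Rightarrow> (nat \<Rightarrow> nat \<Rightarrow> 'f::comm_monoid_add) \<Rightarrow> nat \<Rightarrow> 'f" where
  "rowsum t S = (\<lambda>i. \<Sum>j\<le>t. S i j)"
definition SS :: "nat \<Rightarrow> nat \<Rightarrow> (nat \<Rightarrow> nat \<Rightarrow> 'f::zero) set" where
  "SS v t = {S. \<forall>i j. (v \<le> i \<or> t < j) \<longrightarrow> S i j = 0}"
definition RS :: "nat \<Rightarrow> nat \<Rightarrow> (nat \<Rightarrow> nat \<Rightarrow> nat) set" where
  "RS v t = {\<rho>. (\<forall>k\<le>t. \<rho> k permutes {..<v}) \<and> (\<forall>k. t < k \<longrightarrow> \<rho> k = id)}"
definition WS :: "nat \<Rightarrow> nat \<Rightarrow> (nat \<Rightarrow> nat \<Rightarrow> nat \<Rightarrow> 'f::zero) set" where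
  "WS v t = {\<omega>. \<forall>k i j. (t < k \<or> v \<le> i \<or> t < j) \<longrightarrow> \<omega> k i j = 0}"
definition BS :: "nat \<Rightarrow> nat \<Rightarrow> ((nat \<Rightarrow> nat \<Rightarrow> 'f::zero) \<times> (nat \<Rightarrow> nat \<Rightarrow> nat) \<times> (nat \<Rightarrow> nat \<Rightarrow> nat \<Rightarrow> 'f)) set" where
  "BS v t = SS v t \<times> RS v t \<times> WS v t"
definition mk :: "nat \<Rightarrow> (nat \<Rightarrow> nat \<Rightarrow> 'f::comm_monoid_add) \<times> (nat \<Rightarrow> nat \<Rightarrow> nat) \<times> (nat \<Rightarrow> nat \<Rightarrow> nat \<Rightarrow> 'f)
   \<Rightarrow> (nat \<Rightarrow> 'f) \<Rightarrow> 'f coins" where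
  "mk t b m = \<lparr>pad = rowsum t (fst b), share = fst b, perm = fst (snd b), modif = snd (snd b), secret = m\<rparr>"

lemma SS_PiE: "SS v t = PiE_dflt {..<v} (\<lambda>_. 0) (\<lambda>_. SH t)"
  by (auto simp: SS_def SH_def PiE_dflt_def fun_eq_iff not_less)

lemma RS_PiE: "RS v t = PiE_dflt {..t} id (\<lambda>_. {p. p permutes {..<v}})"
  by (auto simp: RS_def PiE_dflt_def not_le)

lemma WS_PiE: "WS v t = PiE_dflt {..t} (\<lambda>_ _. 0) (\<lambda>_. SS v t)"
  by (auto simp: WS_def SS_def PiE_dflt_def fun_eq_iff not_le; meson leI)

lemma SH_ne: "SH t \<noteq> {}"
proof -
  have "(\<lambda>_. 0) \<in> SH t" by (simp add: SH_def)
  thus ?thesis by blast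
qed

lemma SS_ne: "SS v t \<noteq> {}"
proof -
  have "(\<lambda>_ _. 0) \<in> SS v t" by (simp add: SS_def)
  thus ?thesis by blast
qed

lemma finite_SS: "finite (SS v t :: (nat \<Rightarrow> nat \<Rightarrow> 'f::{zero,finite}) set)"
  unfolding SS_PiE by (rule finite_PiE_dflt) (auto simp: finite_SH)

lemma finite_WS: "finite (WS v t :: (nat \<Rightarrow> nat \<Rightarrow> nat \<Rightarrow> 'f::{zero,finite}) set)"
  unfolding WS_PiE by (rule finite_PiE_dflt) (auto simp: finite_SS)

lemma WS_ne: "WS v t \<noteq> {}"
proof -
  have "(\<lambda>_ _ _. 0) \<in> WS v t" by (simp add: WS_def)
  thus ?thesis by blast
qed

lemma finite_RS: "finite (RS v t)"
  unfolding RS_PiE by (rule finite_PiE_dflt) (auto simp: finite_permutations)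

lemma RS_ne: "RS v t \<noteq> {}"
proof -
  have "(\<lambda>_. id) \<in> RS v t" by (simp add: RS_def permutes_id)
  thus ?thesis by blast
qed

lemma finite_BS: "finite (BS v t :: (_ \<times> _ \<times> (nat \<Rightarrow> nat \<Rightarrow> nat \<Rightarrow> 'f::{zero,finite})) set)"
  by (simp add: BS_def finite_SS finite_RS finite_WS)

lemma BS_ne: "BS v t \<noteq> {}"
  by (simp add: BS_def SS_ne RS_ne WS_ne)

lemma WD_eq: "Pi_pmf {..t} (\<lambda>_ _. 0) (\<lambda>_. Pi_pmf {..<v} (\<lambda>_. 0) (\<lambda>_. Pi_pmf {..t} 0 (\<lambda>_. pmf_of_set UNIV)))
   = pmf_of_set (WS v t :: (nat \<Rightarrow> nat \<Rightarrow> nat \<Rightarrow> 'f::{zero,finite}) set)"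
proof -
  have 1: "Pi_pmf {..t} 0 (\<lambda>_. pmf_of_set UNIV) = pmf_of_set (SH t :: (nat \<Rightarrow> 'f) set)"
    unfolding SH_PiE by (rule Pi_pmf_of_set) auto
  have 2: "Pi_pmf {..<v} (\<lambda>_. 0) (\<lambda>_. pmf_of_set (SH t)) = pmf_of_set (SS v t :: (nat \<Rightarrow> nat \<Rightarrow> 'f) set)"
    unfolding SS_PiE by (rule Pi_pmf_of_set) (auto simp: finite_SH SH_ne)
  have 3: "Pi_pmf {..t} (\<lambda>_ _. 0) (\<lambda>_. pmf_of_set (SS v t)) = pmf_of_set (WS v t :: (nat \<Rightarrow> nat \<Rightarrow> nat \<Rightarrow> 'f) set)"
    unfolding WS_PiE by (rule Pi_pmf_of_set) (auto simp: finite_SS SS_ne)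
  show ?thesis by (simp add: 1 2 3)
qed

lemma RD_eq: "Pi_pmf {..t} id (\<lambda>_. pmf_of_set {p. p permutes {..<v}}) = pmf_of_set (RS v t)"
proof -
  have "{p. p permutes {..<v}} \<noteq> {}" using permutes_id by blast
  thus ?thesis unfolding RS_PiE by (intro Pi_pmf_of_set) (auto simp: finite_permutations)
qed

lemma SD_eq: "bind_pmf (Pi_pmf {..<v} 0 (\<lambda>_. pmf_of_set UNIV))
      (\<lambda>P. Pi_pmf {..<v} (\<lambda>_. 0) (\<lambda>i. pmf_of_set (share_set t (P i))))
   = pmf_of_set (SS v t :: (nat \<Rightarrow> nat \<Rightarrow> 'f::{field,finite}) set)"
proof -
  have "pmf_of_set (SS v t :: (nat \<Rightarrow> nat \<Rightarrow> 'f) set) = Pi_pmf {..<v} (\<lambda>_. 0) (\<lambda>_. pmf_of_set (SH t))"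
    unfolding SS_PiE by (rule Pi_pmf_of_set[symmetric]) (auto simp: finite_SH SH_ne)
  also have "\<dots> = Pi_pmf {..<v} (\<lambda>_. 0) (\<lambda>_. bind_pmf (pmf_of_set UNIV) (\<lambda>p. pmf_of_set (share_set t p)))"
    by (simp add: L0)
  also have "\<dots> = bind_pmf (Pi_pmf {..<v} 0 (\<lambda>_. pmf_of_set UNIV))
      (\<lambda>P. Pi_pmf {..<v} (\<lambda>_. 0) (\<lambda>i. pmf_of_set (share_set t (P i))))"
    by (rule Pi_pmf_bind) simp
  finally show ?thesis ..
qed

lemma joint_PS:
  fixes K :: "(nat \<Rightarrow> 'f::{field,finite}) \<Rightarrow> (nat \<Rightarrow> nat \<Rightarrow> 'f) \<Rightarrow> 'z pmf"
  shows "bind_pmf (Pi_pmf {..<v} 0 (\<lambda>_. pmf_of_set UNIV))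
      (\<lambda>P. bind_pmf (Pi_pmf {..<v} (\<lambda>_. 0) (\<lambda>i. pmf_of_set (share_set t (P i)))) (\<lambda>S. K P S))
   = bind_pmf (pmf_of_set (SS v t)) (\<lambda>S. K (rowsum t S) S)"
proof -
  have "bind_pmf (pmf_of_set (SS v t)) (\<lambda>S. K (rowsum t S) S)
     = bind_pmf (Pi_pmf {..<v} 0 (\<lambda>_. pmf_of_set UNIV))
      (\<lambda>P. bind_pmf (Pi_pmf {..<v} (\<lambda>_. 0) (\<lambda>i. pmf_of_set (share_set t (P i)))) (\<lambda>S. K (rowsum t S) S))"
    by (simp add: SD_eq[symmetric] bind_assoc_pmf)
  also have "\<dots> = bind_pmf (Pi_pmf {..<v} 0 (\<lambda>_. pmf_of_set UNIV))
      (\<lambda>P. bind_pmf (Pi_pmf {..<v} (\<lambda>_. 0) (\<lambda>i. pmf_of_set (share_set t (P i)))) (\<lambda>S. K P S))"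
  proof (rule bind_pmf_cong[OF refl], rule bind_pmf_cong[OF refl])
    fix P :: "nat \<Rightarrow> 'f" and S :: "nat \<Rightarrow> nat \<Rightarrow> 'f"
    assume P: "P \<in> set_pmf (Pi_pmf {..<v} 0 (\<lambda>_. pmf_of_set UNIV))"
      and S: "S \<in> set_pmf (Pi_pmf {..<v} (\<lambda>_. 0) (\<lambda>i. pmf_of_set (share_set t (P i))))"
    have P0: "\<forall>i. v \<le> i \<longrightarrow> P i = 0" using set_Pi_pmf_subset[of "{..<v}" 0 "\<lambda>_. pmf_of_set UNIV"] P by auto
    have "S \<in> PiE_dflt {..<v} (\<lambda>_. 0) (set_pmf \<circ> (\<lambda>i. pmf_of_set (share_set t (P i))))"
      using S by (simp add: set_Pi_pmf)
    hence "\<forall>i. (i < v \<longrightarrow> S i \<in> share_set t (P i)) \<and> (v \<le> i \<longrightarrow> S i = (\<lambda>_. 0))"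
      by (auto simp: PiE_dflt_def finite_share_set share_set_nonempty not_less)
    hence "rowsum t S = P" using P0 unfolding rowsum_def fun_eq_iff share_set_def
      by (metis (mono_tags, lifting) mem_Collect_eq not_less sum.neutral)
    thus "K (rowsum t S) S = K P S" by simp
  qed
  finally show ?thesis ..
qed

lemma coins_repr:
  "coins_pmf v t M = map_pmf (\<lambda>(b, m). mk t b m) (pair_pmf (pmf_of_set (BS v t)) M)"
proof -
  have BD: "pmf_of_set (BS v t :: (_ \<times> _ \<times> (nat \<Rightarrow> nat \<Rightarrow> nat \<Rightarrow> 'a)) set)
     = pair_pmf (pmf_of_set (SS v t)) (pair_pmf (pmf_of_set (RS v t)) (pmf_of_set (WS v t)))"
    unfolding BS_def
    by (simp add: pair_pmf_of_set finite_SS finite_RS finite_WS SS_ne RS_ne WS_ne)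
  show ?thesis
    unfolding coins_pmf_def WD_eq RD_eq joint_PS BD
    by (simp add: pair_pmf_def map_pmf_def bind_assoc_pmf bind_return_pmf mk_def)
qed

lemma char2_add_self:
  assumes "CHAR('f::field) = 2"
  shows "(x::'f) + x = 0"
proof -
  have "(of_nat CHAR('f) :: 'f) = 0" by (rule of_nat_CHAR)
  hence "(2::'f) = 0" unfolding assms by simp
  thus ?thesis by (metis mult_2 mult_zero_left)
qed

definition valid :: "nat \<Rightarrow> nat \<Rightarrow> 'f coins \<Rightarrow> bool" where
  "valid v t c \<longleftrightarrow> (\<forall>k\<le>t. perm c k permutes {..<v})"

lemma valid_mk: "b \<in> BS v t \<Longrightarrow> valid v t (mk t b m)"
  by (auto simp: valid_def mk_def BS_def RS_def)

primrec sf :: "'f coins \<Rightarrow> nat \<Rightarrow> nat \<Rightarrow> nat \<Rightarrow> nat" where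
  "sf c K 0 = id"
| "sf c K (Suc n) = perm c K \<circ> sf c (Suc K) n"

lemma comp_sf: "comp_perm c K \<circ> sf c K n = comp_perm c (K + n)"
proof (induction n arbitrary: K)
  case 0 thus ?case by simp
next
  case (Suc n)
  have "comp_perm c K \<circ> sf c K (Suc n) = comp_perm c (Suc K) \<circ> sf c (Suc K) n" by (simp add: o_assoc)
  also have "\<dots> = comp_perm c (Suc K + n)" by (rule Suc.IH)
  finally show ?case by (simp only: add_Suc add_Suc_right)
qed

lemma sf_permutes: "(\<And>l. K \<le> l \<Longrightarrow> l < K + n \<Longrightarrow> perm c l permutes S) \<Longrightarrow> sf c K n permutes S"
proof (induction n arbitrary: K)
  case 0 thus ?case by (simp only: sf.simps(1) permutes_id)
next
  case (Suc n)
  have "sf c (Suc K) n permutes S" by (rule Suc.IH) (use Suc.prems in auto)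
  moreover have "perm c K permutes S" by (rule Suc.prems) auto
  ultimately show ?case by (simp only: sf.simps permutes_compose)
qed

lemma comp_permutes: "(\<And>l. l < K \<Longrightarrow> perm c l permutes S) \<Longrightarrow> comp_perm c K permutes S"
  by (induction K) (auto simp: permutes_id permutes_compose)

lemma sf_cong: "(\<And>l. K \<le> l \<Longrightarrow> l < K + n \<Longrightarrow> perm c' l = perm c l) \<Longrightarrow> sf c' K n = sf c K n"
proof (induction n arbitrary: K)
  case 0 thus ?case by simp
next
  case (Suc n)
  have "sf c' (Suc K) n = sf c (Suc K) n" by (rule Suc.IH) (use Suc.prems in auto)
  moreover have "perm c' K = perm c K" by (rule Suc.prems) auto
  ultimately show ?case by simp
qed

lemma comp_cong: "(\<And>l. l < K \<Longrightarrow> perm c' l = perm c l) \<Longrightarrow> comp_perm c' K = comp_perm c K"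
  by (induction K) auto

lemma perm_lt: "p permutes {..<v} \<Longrightarrow> a < v \<Longrightarrow> p a < v"
  using permutes_in_image[of p "{..<v}" a] by simp

lemma inv_perm_lt: "p permutes {..<v} \<Longrightarrow> a < v \<Longrightarrow> inv p a < v"
  by (rule perm_lt[OF permutes_inv])

lemma inv_into_perm: "p permutes {..<v} \<Longrightarrow> a < v \<Longrightarrow> inv_into {..<v} p a = inv p a"
  by (rule inv_into_f_eq) (auto simp: permutes_inj_on permutes_inverses inv_perm_lt)

lemma valid_comp: "valid v t c \<Longrightarrow> K \<le> Suc t \<Longrightarrow> comp_perm c K permutes {..<v}"
  by (rule comp_permutes) (auto simp: valid_def)

lemma valid_sf: "valid v t c \<Longrightarrow> K + n \<le> Suc t \<Longrightarrow> sf c K n permutes {..<v}"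
  by (rule sf_permutes) (auto simp: valid_def)

lemma inv_sf:
  assumes "valid v t c" "K \<le> Suc t" "a < v"
  shows "inv (sf c K (Suc t - K)) a = inv (comp_perm c (Suc t)) (comp_perm c K a)"
proof -
  have eq: "comp_perm c (Suc t) = comp_perm c K \<circ> sf c K (Suc t - K)"
    using comp_sf[of c K "Suc t - K"] assms(2) by simp
  have b1: "bij (comp_perm c K)" using valid_comp[OF assms(1,2)] by (rule permutes_bij)
  have b2: "bij (sf c K (Suc t - K))" using valid_sf[OF assms(1), of K "Suc t - K"] assms(2) by (intro permutes_bij) auto
  show ?thesis unfolding eq o_inv_distrib[OF b1 b2]
    using b1 by (simp add: bij_is_inj)
qed

lemma bwd_high: "v \<le> a \<Longrightarrow> bwd v t c n a = 0"
  by (cases n) auto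

lemma cipher_formula:
  assumes ch: "CHAR('f::field) = 2" and val: "valid v t (c::'f coins)"
  shows "n \<le> Suc t \<Longrightarrow> a < v \<Longrightarrow>
     bwd v t c n a = secret c (inv (sf c (Suc t - n) n) a) + (\<Sum>j\<le>t. sh c (Suc t - n) a j)"
proof (induction n arbitrary: a)
  case 0
  thus ?case by (simp add: sender_pad_def)
next
  case (Suc n)
  define K where "K = t - n"
  have K: "Suc t - n = Suc K" "Suc t - Suc n = K" "K \<le> t" using Suc.prems by (auto simp: K_def)
  have pK: "perm c K permutes {..<v}" using val K(3) by (simp add: valid_def)
  define b where "b = inv (perm c K) a"
  have b: "b < v" "perm c K b = a" using inv_perm_lt[OF pK Suc.prems(2)] permutes_inverses(1)[OF pK]
    by (auto simp: b_def)
  have ib: "inv_into {..<v} (perm c (t - n)) a = b"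
    using inv_into_perm[OF pK Suc.prems(2)] by (simp add: b_def K_def)
  have IH: "bwd v t c n b = secret c (inv (sf c (Suc K) n) b) + (\<Sum>j\<le>t. sh c (Suc K) b j)"
    using Suc.IH[OF _ b(1)] Suc.prems K(1) by simp
  have sh: "(\<Sum>j\<le>t. sh c (Suc K) b j) = Omega t c K b + (\<Sum>j\<le>t. sh c K a j)"
    by (simp add: Omega_def sum.distrib b(2))
  have idx: "inv (sf c (Suc K) n) b = inv (sf c K (Suc n)) a"
  proof -
    have b1: "bij (perm c K)" using pK by (rule permutes_bij)
    have b2: "bij (sf c (Suc K) n)" using valid_sf[OF val, of "Suc K" n] Suc.prems K by (intro permutes_bij) auto
    show ?thesis by (simp add: o_inv_distrib[OF b1 b2] b_def)
  qed
  have tn: "t - n = K" by (simp add: K_def)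
  have "bwd v t c (Suc n) a = bwd v t c n b + Omega t c K b"
    using Suc.prems(2) by (simp add: tn ib[unfolded tn])
  also have "\<dots> = secret c (inv (sf c K (Suc n)) a) + (Omega t c K b + (\<Sum>j\<le>t. sh c K a j)) + Omega t c K b"
    unfolding IH sh idx ..
  also have "\<dots> = secret c (inv (sf c K (Suc n)) a) + (\<Sum>j\<le>t. sh c K a j) + (Omega t c K b + Omega t c K b)"
    by (simp add: algebra_simps)
  also have "\<dots> = secret c (inv (sf c K (Suc n)) a) + (\<Sum>j\<le>t. sh c K a j)"
    by (simp add: char2_add_self[OF ch])
  finally show ?case unfolding K(2) .
qed

lemma cipher_level_formula:
  assumes "CHAR('f::field) = 2" "valid v t (c::'f coins)" "K \<le> Suc t" "a < v"
  shows "cipher_level v t c K a = secret c (inv (sf c K (Suc t - K)) a) + (\<Sum>j\<le>t. sh c K a j)"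
  using cipher_formula[OF assms(1,2), of "Suc t - K" a] assms(3,4) by (simp add: cipher_level_def)

lemma sh_shift:
  assumes "\<And>i j. share c' i j = share c i j + (if j = j0 then D i else 0)"
    and "\<And>l. l < k \<Longrightarrow> perm c' l = perm c l \<and> modif c' l = modif c l"
  shows "sh c' k i j = sh c k i j + (if j = j0 then D (comp_perm c k i) else 0)"
  using assms(2)
proof (induction k arbitrary: i)
  case 0 thus ?case by (simp add: assms(1))
next
  case (Suc k)
  have "sh c' k (perm c' k i) j = sh c k (perm c k i) j + (if j = j0 then D (comp_perm c k (perm c k i)) else 0)"
    using Suc.IH[of "perm c' k i"] Suc.prems by simp
  thus ?case using Suc.prems[of k] by (simp add: add.assoc)
qed

lemma sh_up:
  assumes "\<And>i j. i < v \<Longrightarrow> j \<le> t \<Longrightarrow> sh c' K i j = sh c K i j"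
    and "\<And>l. K \<le> l \<Longrightarrow> l < K + n \<Longrightarrow> perm c' l = perm c l \<and> modif c' l = modif c l \<and> perm c l permutes {..<v}"
  shows "i < v \<Longrightarrow> j \<le> t \<Longrightarrow> sh c' (K + n) i j = sh c (K + n) i j"
  using assms(2)
proof (induction n arbitrary: i)
  case 0 thus ?case by (simp add: assms(1))
next
  case (Suc n)
  have p: "perm c' (K + n) = perm c (K + n)" "modif c' (K + n) = modif c (K + n)"
     "perm c (K + n) permutes {..<v}" using Suc.prems(3)[of "K + n"] by auto
  have "sh c' (K + n) (perm c (K + n) i) j = sh c (K + n) (perm c (K + n) i) j"
    by (rule Suc.IH) (use Suc.prems perm_lt[OF p(3)] in auto)
  thus ?case by (simp add: p)
qed

lemma set_coins: "c \<in> set_pmf (coins_pmf v t M) \<Longrightarrow> \<exists>b m. b \<in> BS v t \<and> c = mk t b m"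
  unfolding coins_repr by (auto simp: finite_BS BS_ne)

lemma sh0: "sh c 0 = share c" by simp

lemma reliability:
  assumes ch: "CHAR('f::{field,finite}) = 2"
  shows "AE c in measure_pmf (coins_pmf v t (M :: (nat \<Rightarrow> 'f) pmf)).
        \<forall>a<v. received v t c a = secret c (sender_of v t c a)"
proof (rule AE_pmfI, intro allI impI)
  fix c :: "'f coins" and a assume "c \<in> set_pmf (coins_pmf v t M)" "a < v"
  then obtain b m where b: "b \<in> BS v t" "c = mk t b m" and a: "a < v" using set_coins by blast
  have val: "valid v t c" using b valid_mk by blast
  have sf0: "sf c 0 (Suc t) = comp_perm c (Suc t)" using comp_sf[of c 0 "Suc t"] by simp
  have e1: "received v t c a = secret c (inv (sf c 0 (Suc t)) a) + (\<Sum>j\<le>t. share c a j) + pad c a"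
    unfolding received_def using cipher_level_formula[OF ch val, of 0 a] a by simp
  have e2: "pad c a = (\<Sum>j\<le>t. share c a j)" using b by (simp add: mk_def rowsum_def)
  have e3: "(\<Sum>j\<le>t. share c a j) + (\<Sum>j\<le>t. share c a j) = 0" by (rule char2_add_self[OF ch])
  have "received v t c a = secret c (inv (comp_perm c (Suc t)) a)"
    unfolding e1 e2 add.assoc e3 add_0_right sf0 ..
  also have "inv (comp_perm c (Suc t)) a = sender_of v t c a"
    unfolding sender_of_def by (rule sym, rule inv_into_perm[OF valid_comp[OF val order_refl] a])
  finally show "received v t c a = secret c (sender_of v t c a)" .
qed

lemma viewA_eq:
  assumes "\<And>i. i < v \<Longrightarrow> sh c' k i j = sh c k i j" "perm c' k = perm c k" "modif c' k = modif c k"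
  shows "viewA v t c' (k, j) = viewA v t c (k, j)"
  using assms by (cases "j = 0") (auto simp: viewA_def fun_eq_iff)

lemma viewAB_eq:
  assumes "\<And>i. i < v \<Longrightarrow> sh c' k i j = sh c k i j" "perm c' k = perm c k" "modif c' k = modif c k"
    "j = 0 \<Longrightarrow> cipher_level v t c' (Suc k) = cipher_level v t c (Suc k)"
  shows "viewAB v t c' (k, j) = viewAB v t c (k, j)"
  using assms viewA_eq[OF assms(1-3)] by (simp add: viewAB_def)

lemma cview_eq: "(\<And>s. s \<in> C \<Longrightarrow> V' s = V s) \<Longrightarrow> coalition_view C V' = coalition_view C V"
  by (auto simp: coalition_view_def fun_eq_iff)

definition shiftB :: "nat \<Rightarrow> (nat \<Rightarrow> 'f::monoid_add) \<Rightarrow> (nat \<Rightarrow> nat \<Rightarrow> 'f) \<times> 'r \<Rightarrow> (nat \<Rightarrow> nat \<Rightarrow> 'f) \<times> 'r" where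
  "shiftB j0 D b = ((\<lambda>i j. fst b i j + (if j = j0 then D i else 0)), snd b)"

lemma shift_in_BS:
  "b \<in> BS v t \<Longrightarrow> j0 \<le> t \<Longrightarrow> (\<And>i. v \<le> i \<Longrightarrow> D i = 0) \<Longrightarrow> shiftB j0 D b \<in> BS v t"
  by (cases b) (auto simp: BS_def SS_def shiftB_def)

lemma shift_bij:
  fixes D :: "(nat \<Rightarrow> nat \<Rightarrow> nat) \<Rightarrow> nat \<Rightarrow> 'f::ab_group_add"
  assumes "j0 \<le> t" "\<And>\<rho> i. v \<le> i \<Longrightarrow> D \<rho> i = 0"
  shows "bij_betw (\<lambda>b. shiftB j0 (D (fst (snd b))) b) (BS v t) (BS v t)"
proof (rule bij_betw_byWitness[where f'="\<lambda>b. shiftB j0 (\<lambda>i. - D (fst (snd b)) i) b"])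
  show "\<forall>b\<in>BS v t. shiftB j0 (\<lambda>i. - D (fst (snd (shiftB j0 (D (fst (snd b))) b))) i) (shiftB j0 (D (fst (snd b))) b) = b"
    by (auto simp: shiftB_def fun_eq_iff)
  show "\<forall>b\<in>BS v t. shiftB j0 (D (fst (snd (shiftB j0 (\<lambda>i. - D (fst (snd b)) i) b)))) (shiftB j0 (\<lambda>i. - D (fst (snd b)) i) b) = b"
    by (auto simp: shiftB_def fun_eq_iff)
  show "(\<lambda>b. shiftB j0 (D (fst (snd b))) b) ` BS v t \<subseteq> BS v t"
    using assms by (auto intro!: shift_in_BS)
  show "(\<lambda>b. shiftB j0 (\<lambda>i. - D (fst (snd b)) i) b) ` BS v t \<subseteq> BS v t"
    using assms by (auto intro!: shift_in_BS)
qed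

lemma mk_shift_sh:
  "sh (mk t (shiftB j0 D b) m) k i j = sh (mk t b m') k i j + (if j = j0 then D (comp_perm (mk t b m') k i) else 0)"
  by (rule sh_shift) (auto simp: mk_def shiftB_def)

lemma mk_perm [simp]: "perm (mk t b m) = fst (snd b)" by (simp add: mk_def)
lemma mk_modif [simp]: "modif (mk t b m) = snd (snd b)" by (simp add: mk_def)
lemma shiftB_snd [simp]: "snd (shiftB j0 D b) = snd b" by (simp add: shiftB_def)
lemma mk_secret [simp]: "secret (mk t b m) = m" by (simp add: mk_def)

lemma exists_free:
  assumes "C \<subseteq> {..t} \<times> {..t}" "card C \<le> t"
  shows "\<exists>k0\<le>t. \<forall>s\<in>C. fst s \<noteq> k0" "\<exists>j0\<le>t. \<forall>s\<in>C. snd s \<noteq> j0"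
proof -
  have fC: "finite C" using assms(1) finite_subset by blast
  have "card (fst ` C) \<le> t" using card_image_le[OF fC, of fst] assms(2) by simp
  hence "\<not> {..t} \<subseteq> fst ` C" using card_mono[of "fst ` C" "{..t}"] fC by auto
  thus "\<exists>k0\<le>t. \<forall>s\<in>C. fst s \<noteq> k0" by force
  have "card (snd ` C) \<le> t" using card_image_le[OF fC, of snd] assms(2) by simp
  hence "\<not> {..t} \<subseteq> snd ` C" using card_mono[of "snd ` C" "{..t}"] fC by auto
  thus "\<exists>j0\<le>t. \<forall>s\<in>C. snd s \<noteq> j0" by force
qed

lemma vu_from_mix:
  assumes "\<And>m. m \<in> set_pmf M \<Longrightarrow>
     map_pmf (\<lambda>b. (W (mk t b m), X (mk t b m))) (pmf_of_set (BS v t)) = pair_pmf (Q1 m) Q2"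
  shows "view_useless (coins_pmf v t M) W X"
proof (rule view_useless_pair)
  have "map_pmf (\<lambda>c. (W c, X c)) (coins_pmf v t M)
      = map_pmf (\<lambda>(b, m). (\<lambda>b. (W (mk t b m), X (mk t b m))) b) (pair_pmf (pmf_of_set (BS v t)) M)"
    unfolding coins_repr map_pmf_comp by (simp add: case_prod_beta')
  also have "\<dots> = pair_pmf (bind_pmf M Q1) Q2"
    by (rule mix_lemma) (rule assms)
  finally show "map_pmf (\<lambda>c. (W c, X c)) (coins_pmf v t M) = pair_pmf (bind_pmf M Q1) Q2" .
qed

lemma vu_from_core:
  assumes "\<And>m. m \<in> set_pmf M \<Longrightarrow> map_pmf (\<lambda>b. W (mk t b m)) (pmf_of_set (BS v t)) = Q"
    and "\<And>b m. X (mk t b m) = g m"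
  shows "view_useless (coins_pmf v t M) W X"
proof (rule view_useless_pair)
  have "map_pmf (\<lambda>c. (W c, X c)) (coins_pmf v t M)
      = map_pmf (\<lambda>(b, m). ((\<lambda>m b. W (mk t b m)) m b, g m)) (pair_pmf (pmf_of_set (BS v t)) M)"
    unfolding coins_repr map_pmf_comp by (simp add: case_prod_beta' assms(2))
  also have "\<dots> = pair_pmf Q (map_pmf g M)"
    by (rule core_lemma) (rule assms)
  finally show "map_pmf (\<lambda>c. (W c, X c)) (coins_pmf v t M) = pair_pmf Q (map_pmf g M)" .
qed

definition pc :: "(nat \<Rightarrow> nat \<Rightarrow> nat) \<Rightarrow> 'f::zero coins" where
  "pc \<rho> = \<lparr>pad = \<lambda>_. 0, share = \<lambda>_ _. 0, perm = \<rho>, modif = \<lambda>_ _ _. 0, secret = \<lambda>_. 0\<rparr>"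

lemma comp_mk: "comp_perm (mk t b m) K = comp_perm (pc (fst (snd b)) :: 'f::comm_monoid_add coins) K"
  by (rule comp_cong) (simp add: mk_def pc_def)

lemma sum_shift: "(j0::nat) \<le> t \<Longrightarrow> (\<Sum>j\<le>t. f j + (if j = j0 then y else 0)) = (\<Sum>j\<le>t. f j) + (y::'f::comm_monoid_add)"
  by (simp add: sum.distrib)

lemma viewA_shift_inv:
  assumes "\<forall>s\<in>C. snd s \<noteq> j0"
  shows "coalition_view C (viewA v t (mk t (shiftB j0 D b) m)) = coalition_view C (viewA v t (mk t b m'))"
proof (rule cview_eq)
  fix s assume "s \<in> C"
  then obtain k j where s: "s = (k, j)" "j \<noteq> j0" using assms by (cases s) auto
  show "viewA v t (mk t (shiftB j0 D b) m) s = viewA v t (mk t b m') s"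
    unfolding s(1) by (rule viewA_eq) (use s(2) in \<open>simp_all add: mk_shift_sh[of _ _ _ _ _ _ _ _ m']\<close>)
qed

lemma claim_pad:
  fixes M :: "(nat \<Rightarrow> 'f::{field,finite}) pmf"
  assumes j0: "j0 \<le> t" "\<forall>s\<in>C. snd s \<noteq> j0" and a: "a < v"
  shows "view_useless (coins_pmf v t M) (\<lambda>c. coalition_view C (viewA v t c)) (\<lambda>c. pad c a)"
proof (rule vu_from_mix)
  fix m :: "nat \<Rightarrow> 'f"
  let ?W = "\<lambda>b. coalition_view C (viewA v t (mk t b m))"
  show "map_pmf (\<lambda>b. (?W b, pad (mk t b m) a)) (pmf_of_set (BS v t))
      = pair_pmf (map_pmf ?W (pmf_of_set (BS v t))) (pmf_of_set UNIV)"
  proof (rule sym_indep)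
    fix x x' :: 'f
    define D where "D = (\<lambda>(\<rho>::nat \<Rightarrow> nat \<Rightarrow> nat) i. if i = a then x' - x else 0)"
    have bij: "bij_betw (\<lambda>b. shiftB j0 (D (fst (snd b))) b) (BS v t) (BS v t)"
      by (rule shift_bij) (use j0 a in \<open>auto simp: D_def\<close>)
    moreover have "\<forall>b\<in>BS v t. ?W (shiftB j0 (D (fst (snd b))) b) = ?W b"
      using viewA_shift_inv[OF j0(2)] by blast
    moreover have "\<forall>b\<in>BS v t. pad (mk t b m) a = x \<longrightarrow> pad (mk t (shiftB j0 (D (fst (snd b))) b) m) a = x'"
      using j0(1) by (auto simp: mk_def shiftB_def rowsum_def D_def sum_shift)
    ultimately show "\<exists>\<phi>. bij_betw \<phi> (BS v t) (BS v t) \<and> (\<forall>b\<in>BS v t. ?W (\<phi> b) = ?W b) \<and>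
        (\<forall>b\<in>BS v t. pad (mk t b m) a = x \<longrightarrow> pad (mk t (\<phi> b) m) a = x')" by blast
  qed (auto simp: finite_BS BS_ne)
qed

lemma claim_sender_pad:
  fixes M :: "(nat \<Rightarrow> 'f::{field,finite}) pmf"
  assumes j0: "j0 \<le> t" "\<forall>s\<in>C. snd s \<noteq> j0" and i0: "i0 < v"
  shows "view_useless (coins_pmf v t M) (\<lambda>c. coalition_view C (viewA v t c)) (\<lambda>c. sender_pad t c i0)"
proof (rule vu_from_mix)
  fix m :: "nat \<Rightarrow> 'f"
  let ?W = "\<lambda>b. coalition_view C (viewA v t (mk t b m))"
  show "map_pmf (\<lambda>b. (?W b, sender_pad t (mk t b m) i0)) (pmf_of_set (BS v t))
      = pair_pmf (map_pmf ?W (pmf_of_set (BS v t))) (pmf_of_set UNIV)"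
  proof (rule sym_indep)
    fix x x' :: 'f
    define D where "D = (\<lambda>(\<rho>::nat \<Rightarrow> nat \<Rightarrow> nat) i. if i < v \<and> i = comp_perm (pc \<rho> :: 'f coins) (Suc t) i0 then x' - x else 0)"
    have bij: "bij_betw (\<lambda>b. shiftB j0 (D (fst (snd b))) b) (BS v t) (BS v t)"
      by (rule shift_bij) (use j0 in \<open>auto simp: D_def\<close>)
    moreover have "\<forall>b\<in>BS v t. ?W (shiftB j0 (D (fst (snd b))) b) = ?W b"
      using viewA_shift_inv[OF j0(2)] by blast
    moreover have "\<forall>b\<in>BS v t. sender_pad t (mk t b m) i0 = x \<longrightarrow> sender_pad t (mk t (shiftB j0 (D (fst (snd b))) b) m) i0 = x'"
    proof (intro ballI impI)
      fix b :: "(nat \<Rightarrow> nat \<Rightarrow> 'f) \<times> (nat \<Rightarrow> nat \<Rightarrow> nat) \<times> (nat \<Rightarrow> nat \<Rightarrow> nat \<Rightarrow> 'f)"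
      assume b: "b \<in> BS v t" and x: "sender_pad t (mk t b m) i0 = x"
      have lt: "comp_perm (mk t b m) (Suc t) i0 < v"
        using perm_lt[OF valid_comp[OF valid_mk[OF b] order_refl] i0] .
      have ceq: "comp_perm (mk t b m) (Suc t) = comp_perm (pc (fst (snd b)) :: 'f coins) (Suc t)" by (rule comp_mk)
      have "D (fst (snd b)) (comp_perm (mk t b m) (Suc t) i0) = x' - x"
        unfolding D_def ceq[symmetric] using lt by simp
      thus "sender_pad t (mk t (shiftB j0 (D (fst (snd b))) b) m) i0 = x'"
        unfolding sender_pad_def mk_shift_sh[of _ _ _ _ _ _ _ _ m] sum_shift[OF j0(1)]
        using x by (simp add: sender_pad_def)
    qed
    ultimately show "\<exists>\<phi>. bij_betw \<phi> (BS v t) (BS v t) \<and> (\<forall>b\<in>BS v t. ?W (\<phi> b) = ?W b) \<and>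
        (\<forall>b\<in>BS v t. sender_pad t (mk t b m) i0 = x \<longrightarrow> sender_pad t (mk t (\<phi> b) m) i0 = x')" by blast
  qed (auto simp: finite_BS BS_ne)
qed

lemma map_bij_pmf_of_set: "bij_betw f A A \<Longrightarrow> finite A \<Longrightarrow> A \<noteq> {} \<Longrightarrow> map_pmf f (pmf_of_set A) = pmf_of_set A"
  by (simp add: map_pmf_of_set_inj bij_betw_imp_inj_on bij_betw_imp_surj_on)

lemma claim_secret:
  fixes M :: "(nat \<Rightarrow> 'f::{field,finite}) pmf"
  assumes ch: "CHAR('f) = 2" and j0: "j0 \<le> t" "\<forall>s\<in>C. snd s \<noteq> j0" and C: "C \<subseteq> {..t} \<times> {..t}"
  shows "view_useless (coins_pmf v t M) (\<lambda>c. coalition_view C (viewAB v t c)) (\<lambda>c. secret c i0)"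
proof (rule vu_from_core[where g = "\<lambda>m. m i0"])
  fix m :: "nat \<Rightarrow> 'f"
  let ?W = "\<lambda>m b. coalition_view C (viewAB v t (mk t b m))"
  define D where "D = (\<lambda>(\<rho>::nat \<Rightarrow> nat \<Rightarrow> nat) i. if i < v then m (inv (comp_perm (pc \<rho> :: 'f coins) (Suc t)) i) else 0)"
  define \<phi> where "\<phi> = (\<lambda>b::(nat\<Rightarrow>nat\<Rightarrow>'f)\<times>(nat\<Rightarrow>nat\<Rightarrow>nat)\<times>(nat\<Rightarrow>nat\<Rightarrow>nat\<Rightarrow>'f). shiftB j0 (D (fst (snd b))) b)"
  have bij: "bij_betw \<phi> (BS v t) (BS v t)"
    unfolding \<phi>_def by (rule shift_bij) (use j0 in \<open>auto simp: D_def\<close>)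
  have eq: "?W m b = ?W (\<lambda>_. 0) (\<phi> b)" if b: "b \<in> BS v t" for b
  proof (rule sym, rule cview_eq)
    fix s assume "s \<in> C"
    moreover obtain k j where s1: "s = (k, j)" by (cases s)
    ultimately have s: "s = (k, j)" "j \<noteq> j0" "k \<le> t" using j0 C by auto
    let ?c = "mk t b m" and ?c' = "mk t (\<phi> b) (\<lambda>_. 0)"
    have "\<phi> b \<in> BS v t" unfolding \<phi>_def by (rule shift_in_BS[OF b j0(1)]) (simp add: D_def)
    hence val: "valid v t ?c" "valid v t ?c'" using valid_mk b by blast+
    have shc: "sh ?c' K i j = sh ?c K i j + (if j = j0 then D (fst (snd b)) (comp_perm ?c K i) else 0)" for K i j
      unfolding \<phi>_def by (rule mk_shift_sh)
    have permeq: "perm ?c' = perm ?c" by (simp add: \<phi>_def)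
    have cl: "cipher_level v t ?c' (Suc k) = cipher_level v t ?c (Suc k)"
    proof (rule ext)
      fix a show "cipher_level v t ?c' (Suc k) a = cipher_level v t ?c (Suc k) a"
      proof (cases "a < v")
        case False thus ?thesis by (simp add: cipher_level_def bwd_high)
      next
        case True
        have lt: "comp_perm ?c (Suc k) a < v" using perm_lt[OF valid_comp[OF val(1), of "Suc k"] True] s(3) by simp
        have sfeq: "sf ?c' (Suc k) (Suc t - Suc k) = sf ?c (Suc k) (Suc t - Suc k)"
          by (rule sf_cong) (simp add: \<phi>_def)
        have "cipher_level v t ?c' (Suc k) a = (\<Sum>j\<le>t. sh ?c' (Suc k) a j)"
          using cipher_level_formula[OF ch val(2), of "Suc k" a] True s(3)
          by (simp del: sh.simps)
        also have "\<dots> = (\<Sum>j\<le>t. sh ?c (Suc k) a j) + D (fst (snd b)) (comp_perm ?c (Suc k) a)"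
          unfolding shc sum_shift[OF j0(1)] ..
        also have "D (fst (snd b)) (comp_perm ?c (Suc k) a) = m (inv (sf ?c (Suc k) (Suc t - Suc k)) a)"
        proof -
          have ceq: "comp_perm (pc (fst (snd b)) :: 'f coins) (Suc t) = comp_perm ?c (Suc t)" by (rule comp_mk[symmetric])
          show ?thesis unfolding D_def ceq using lt inv_sf[OF val(1), of "Suc k" a] True s(3) by simp
        qed
        finally show ?thesis
          using cipher_level_formula[OF ch val(1), of "Suc k" a] True s(3) by (simp add: add.commute del: sh.simps)
      qed
    qed
    show "viewAB v t ?c' s = viewAB v t ?c s"
      unfolding s(1)
    proof (rule viewAB_eq)
      show "sh ?c' k i j = sh ?c k i j" for i using s(2) by (simp only: shc) simp
    qed (use cl in \<open>simp_all add: \<phi>_def\<close>)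
  qed
  have "map_pmf (?W m) (pmf_of_set (BS v t)) = map_pmf (\<lambda>b. ?W (\<lambda>_. 0) (\<phi> b)) (pmf_of_set (BS v t))"
    by (rule map_pmf_cong) (simp_all add: eq finite_BS BS_ne)
  also have "\<dots> = map_pmf (?W (\<lambda>_. 0)) (map_pmf \<phi> (pmf_of_set (BS v t)))"
    by (simp add: map_pmf_comp)
  also have "\<dots> = map_pmf (?W (\<lambda>_. 0)) (pmf_of_set (BS v t))"
    by (simp add: map_bij_pmf_of_set[OF bij finite_BS BS_ne])
  finally show "map_pmf (\<lambda>b. coalition_view C (viewAB v t (mk t b m))) (pmf_of_set (BS v t))
     = map_pmf (?W (\<lambda>_. 0)) (pmf_of_set (BS v t))" .
qed (simp add: mk_def)

primrec compR :: "(nat \<Rightarrow> nat \<Rightarrow> nat) \<Rightarrow> nat \<Rightarrow> nat \<Rightarrow> nat" where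
  "compR \<rho> 0 = id"
| "compR \<rho> (Suc n) = compR \<rho> n \<circ> \<rho> n"

primrec sfR :: "(nat \<Rightarrow> nat \<Rightarrow> nat) \<Rightarrow> nat \<Rightarrow> nat \<Rightarrow> nat \<Rightarrow> nat" where
  "sfR \<rho> K 0 = id"
| "sfR \<rho> K (Suc n) = \<rho> K \<circ> sfR \<rho> (Suc K) n"

lemma comp_perm_R: "comp_perm c K = compR (perm c) K"
  by (induction K) auto

lemma sf_R: "sf c K n = sfR (perm c) K n"
  by (induction n arbitrary: K) auto

lemma compR_sfR: "compR \<rho> K \<circ> sfR \<rho> K n = compR \<rho> (K + n)"
proof (induction n arbitrary: K)
  case 0 thus ?case by simp
next
  case (Suc n)
  have "compR \<rho> K \<circ> sfR \<rho> K (Suc n) = compR \<rho> (Suc K) \<circ> sfR \<rho> (Suc K) n" by (simp add: o_assoc)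
  also have "\<dots> = compR \<rho> (Suc K + n)" by (rule Suc.IH)
  finally show ?case by (simp only: add_Suc add_Suc_right)
qed

lemma sfR_permutes: "(\<And>l. K \<le> l \<Longrightarrow> l < K + n \<Longrightarrow> \<rho> l permutes S) \<Longrightarrow> sfR \<rho> K n permutes S"
proof (induction n arbitrary: K)
  case 0 thus ?case by (simp only: sfR.simps(1) permutes_id)
next
  case (Suc n)
  have "sfR \<rho> (Suc K) n permutes S" by (rule Suc.IH) (use Suc.prems in auto)
  moreover have "\<rho> K permutes S" by (rule Suc.prems) auto
  ultimately show ?case by (simp only: sfR.simps permutes_compose)
qed

lemma compR_permutes: "(\<And>l. l < K \<Longrightarrow> \<rho> l permutes S) \<Longrightarrow> compR \<rho> K permutes S"
proof (induction K)
  case 0 thus ?case by (simp only: compR.simps(1) permutes_id)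
next
  case (Suc K)
  have "compR \<rho> K permutes S" by (rule Suc.IH) (use Suc.prems in auto)
  moreover have "\<rho> K permutes S" by (rule Suc.prems) auto
  ultimately show ?case by (simp only: compR.simps permutes_compose)
qed

lemma sfR_cong: "(\<And>l. K \<le> l \<Longrightarrow> l < K + n \<Longrightarrow> \<rho>' l = \<rho> l) \<Longrightarrow> sfR \<rho>' K n = sfR \<rho> K n"
proof (induction n arbitrary: K)
  case 0 thus ?case by simp
next
  case (Suc n)
  have "sfR \<rho>' (Suc K) n = sfR \<rho> (Suc K) n" by (rule Suc.IH) (use Suc.prems in auto)
  moreover have "\<rho>' K = \<rho> K" by (rule Suc.prems) auto
  ultimately show ?case by simp
qed

lemma compR_cong: "(\<And>l. l < K \<Longrightarrow> \<rho>' l = \<rho> l) \<Longrightarrow> compR \<rho>' K = compR \<rho> K"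
  by (induction K) auto

lemma sh_mk_sec: "sh (mk t b ma) k = sh (mk t b mb) k"
  by (induction k) (auto simp: mk_def)

lemma RS_perm: "\<rho> \<in> RS v t \<Longrightarrow> l \<le> t \<Longrightarrow> \<rho> l permutes {..<v}"
  by (simp add: RS_def)

context
  fixes v t k0 j0 x x' :: nat and m :: "nat \<Rightarrow> 'f::{field,finite}"
  assumes k0: "k0 \<le> t" and j0: "j0 \<le> t" and xv: "x < v" "x' < v"
begin

definition "Bp \<rho> = sfR \<rho> (Suc k0) (t - k0)"
definition "tau \<rho> = Transposition.transpose (Bp \<rho> x) (Bp \<rho> x')"
definition "rhoF \<rho> = \<rho>(k0 := \<rho> k0 \<circ> tau \<rho>)"
definition "dF \<rho> i = (if i < v then m (inv (compR \<rho> (Suc t)) i) - m (inv (compR (rhoF \<rho>) (Suc t)) i) else 0)"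
definition "shB b = sh (mk t b (\<lambda>_. 0::'f))"
definition "omF b = (\<lambda>k i j. snd (snd b) k i j + (if k = k0 \<and> i < v \<and> j \<le> t then
     shB b k0 (fst (snd b) k0 i) j - shB b k0 (rhoF (fst (snd b)) k0 i) j
     - (if j = j0 then dF (fst (snd b)) (compR (fst (snd b)) k0 (rhoF (fst (snd b)) k0 i)) else 0) else 0))"
definition "phi b = ((\<lambda>i j. fst b i j + (if j = j0 then dF (fst (snd b)) i else 0)), rhoF (fst (snd b)), omF b)"

lemma rho_other: "l \<noteq> k0 \<Longrightarrow> rhoF \<rho> l = \<rho> l"
  by (simp add: rhoF_def)

lemma rho_k0: "rhoF \<rho> k0 = \<rho> k0 \<circ> tau \<rho>"
  by (simp add: rhoF_def)

lemma Bp_inv: "Bp (rhoF \<rho>) = Bp \<rho>"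
  unfolding Bp_def by (rule sfR_cong) (simp add: rho_other)

lemma tau_inv: "tau (rhoF \<rho>) = tau \<rho>"
  by (simp add: tau_def Bp_inv)

lemma rho_invol: "rhoF (rhoF \<rho>) = \<rho>"
proof -
  have "rhoF (rhoF \<rho>) = (rhoF \<rho>)(k0 := rhoF \<rho> k0 \<circ> tau \<rho>)"
    by (simp only: rhoF_def[of "rhoF \<rho>"] tau_inv)
  also have "\<dots> = \<rho>"
  proof (rule ext)
    fix l show "((rhoF \<rho>)(k0 := rhoF \<rho> k0 \<circ> tau \<rho>)) l = \<rho> l"
      by (cases "l = k0") (simp_all add: rho_other rho_k0 tau_def o_assoc[symmetric])
  qed
  finally show ?thesis .
qed

lemma comp_low: "K \<le> k0 \<Longrightarrow> compR (rhoF \<rho>) K = compR \<rho> K"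
  by (rule compR_cong) (simp add: rho_other)

lemma Bp_lt: "\<rho> \<in> RS v t \<Longrightarrow> y < v \<Longrightarrow> Bp \<rho> y < v"
  unfolding Bp_def by (rule perm_lt[OF sfR_permutes]) (use k0 in \<open>auto intro: RS_perm\<close>)

lemma rho_RS: "\<rho> \<in> RS v t \<Longrightarrow> rhoF \<rho> \<in> RS v t"
proof -
  assume r: "\<rho> \<in> RS v t"
  have "tau \<rho> permutes {..<v}" unfolding tau_def by (rule permutes_swap_id) (use Bp_lt[OF r] xv in auto)
  hence "\<rho> k0 \<circ> tau \<rho> permutes {..<v}" using RS_perm[OF r k0] by (rule permutes_compose)
  thus ?thesis using r k0 by (auto simp: RS_def rhoF_def)
qed

lemma comp_top: "compR \<rho> (Suc t) = compR \<rho> k0 \<circ> \<rho> k0 \<circ> Bp \<rho>"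
proof -
  have "compR \<rho> (Suc t) = compR \<rho> k0 \<circ> sfR \<rho> k0 (Suc (t - k0))"
    using compR_sfR[of \<rho> k0 "Suc (t - k0)"] k0 by simp
  thus ?thesis by (simp add: Bp_def o_assoc)
qed

lemma dF_neg: "dF (rhoF \<rho>) i = - dF \<rho> i"
  by (simp add: dF_def rho_invol)

lemma dF_high: "v \<le> i \<Longrightarrow> dF \<rho> i = 0"
  by (simp add: dF_def)


lemma phi_BS: "b \<in> BS v t \<Longrightarrow> phi b \<in> BS v t"
proof -
  assume b: "b \<in> BS v t"
  obtain S \<rho> \<omega> where bb: "b = (S, \<rho>, \<omega>)" by (cases b)
  have S: "S \<in> SS v t" and r: "\<rho> \<in> RS v t" and w: "\<omega> \<in> WS v t" using b bb by (auto simp: BS_def)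
  have "(\<lambda>i j. S i j + (if j = j0 then dF \<rho> i else 0)) \<in> SS v t"
    using S j0 by (auto simp: SS_def dF_high)
  moreover have "rhoF \<rho> \<in> RS v t" by (rule rho_RS[OF r])
  moreover have "omF b \<in> WS v t" using w k0 by (auto simp: WS_def omF_def bb)
  ultimately show ?thesis by (simp add: phi_def bb BS_def cong: if_cong)
qed

lemma sh_phi_low:
  assumes "K \<le> k0"
  shows "sh (mk t (phi b) ma) K i j = sh (mk t b mb) K i j + (if j = j0 then dF (fst (snd b)) (compR (fst (snd b)) K i) else 0)"
proof -
  have "sh (mk t (phi b) ma) K i j = sh (mk t b mb) K i j + (if j = j0 then dF (fst (snd b)) (comp_perm (mk t b mb) K i) else 0)"
  proof (rule sh_shift)
    show "share (mk t (phi b) ma) i j = share (mk t b mb) i j + (if j = j0 then dF (fst (snd b)) i else 0)" for i j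
      by (simp add: mk_def phi_def)
    show "perm (mk t (phi b) ma) l = perm (mk t b mb) l \<and> modif (mk t (phi b) ma) l = modif (mk t b mb) l" if "l < K" for l
      using that assms by (auto simp: phi_def rho_other omF_def fun_eq_iff)
  qed
  thus ?thesis by (simp add: comp_perm_R)
qed

lemma omF_off: "\<not> (k = k0 \<and> i < v \<and> j \<le> t) \<Longrightarrow> omF c k i j = snd (snd c) k i j"
  unfolding omF_def by (subst if_not_P) simp_all

lemma omF_on: "k0 \<le> t \<Longrightarrow> i < v \<Longrightarrow> j \<le> t \<Longrightarrow> omF c k0 i j = snd (snd c) k0 i j +
     (shB c k0 (fst (snd c) k0 i) j - shB c k0 (rhoF (fst (snd c)) k0 i) j
     - (if j = j0 then dF (fst (snd c)) (compR (fst (snd c)) k0 (rhoF (fst (snd c)) k0 i)) else 0))"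
  by (simp add: omF_def)

lemma phi_invol: "b \<in> BS v t \<Longrightarrow> phi (phi b) = b"
proof -
  assume b: "b \<in> BS v t"
  obtain S \<rho> \<omega> where bb: "b = (S, \<rho>, \<omega>)" by (cases b)
  define \<rho>1 where "\<rho>1 = rhoF \<rho>"
  have pb: "phi b = ((\<lambda>i j. S i j + (if j = j0 then dF \<rho> i else 0)), \<rho>1, omF b)"
    by (simp add: phi_def bb \<rho>1_def cong: if_cong)
  have r1: "rhoF \<rho>1 = \<rho>" by (simp add: \<rho>1_def rho_invol)
  have d1: "dF \<rho>1 i = - dF \<rho> i" for i by (simp add: \<rho>1_def dF_neg)
  have S2: "(\<lambda>i j. (S i j + (if j = j0 then dF \<rho> i else 0)) + (if j = j0 then dF \<rho>1 i else 0)) = S"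
    by (auto simp: d1 fun_eq_iff)
  have shB1: "shB (phi b) k0 y j = shB b k0 y j + (if j = j0 then dF \<rho> (compR \<rho> k0 y) else 0)" for y j
    unfolding shB_def using sh_phi_low[OF order_refl, where ma="\<lambda>_. 0" and mb="\<lambda>_. 0" and b=b] by (simp add: bb)
  have c1: "compR \<rho>1 k0 = compR \<rho> k0" by (simp add: \<rho>1_def comp_low)
  have om: "omF (phi b) = \<omega>"
  proof (intro ext)
    fix k i j
    show "omF (phi b) k i j = \<omega> k i j"
    proof (cases "k = k0 \<and> i < v \<and> j \<le> t")
      case False
      have "omF (phi b) k i j = snd (snd (phi b)) k i j" using False by (rule omF_off)
      also have "\<dots> = omF b k i j" by (simp add: pb)
      also have "\<dots> = snd (snd b) k i j" using False by (rule omF_off)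
      finally show ?thesis by (simp add: bb)
    next
      case True
      hence kk: "k = k0" by simp
      have e1: "omF (phi b) k0 i j = snd (snd (phi b)) k0 i j +
         (shB (phi b) k0 (\<rho>1 k0 i) j - shB (phi b) k0 (\<rho> k0 i) j
          - (if j = j0 then dF \<rho>1 (compR \<rho>1 k0 (\<rho> k0 i)) else 0))"
        using omF_on[OF k0, of i j "phi b"] True r1 by (simp add: pb)
      have e2: "snd (snd (phi b)) k0 i j = omF b k0 i j" by (simp add: pb)
      have e3: "omF b k0 i j = \<omega> k0 i j +
         (shB b k0 (\<rho> k0 i) j - shB b k0 (\<rho>1 k0 i) j
          - (if j = j0 then dF \<rho> (compR \<rho> k0 (\<rho>1 k0 i)) else 0))"
        using omF_on[OF k0, of i j b] True by (simp add: bb \<rho>1_def cong: if_cong)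
      show ?thesis unfolding kk e1 e2 e3
        by (cases "j = j0") (simp_all add: shB1 c1 d1)
    qed
  qed
  define b1 where "b1 = phi b"
  have "phi b1 = ((\<lambda>i j. fst b1 i j + (if j = j0 then dF (fst (snd b1)) i else 0)), rhoF (fst (snd b1)), omF b1)"
    by (simp only: phi_def)
  also have "\<dots> = b" using S2 r1 om unfolding b1_def pb by (simp add: bb cong: if_cong)
  finally show "phi (phi b) = b" by (simp only: b1_def)
qed

lemma phi_bij: "bij_betw phi (BS v t) (BS v t)"
  by (rule bij_betw_byWitness[where f'=phi]) (auto simp: phi_invol phi_BS)

lemma sender_phi:
  assumes b: "b \<in> BS v t" and a: "a < v" and sx: "sender_of v t (mk t b ma) a = x"
  shows "sender_of v t (mk t (phi b) mb) a = x'"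
proof -
  obtain S \<rho> \<omega> where bb: "b = (S, \<rho>, \<omega>)" by (cases b)
  have r: "\<rho> \<in> RS v t" using b bb by (simp add: BS_def)
  have r1: "rhoF \<rho> \<in> RS v t" by (rule rho_RS[OF r])
  have P: "compR \<rho> (Suc t) permutes {..<v}" by (rule compR_permutes) (auto intro: RS_perm[OF r])
  have P1: "compR (rhoF \<rho>) (Suc t) permutes {..<v}" by (rule compR_permutes) (auto intro: RS_perm[OF r1])
  have "inv (compR \<rho> (Suc t)) a = x"
    using sx inv_into_perm[OF P a] by (simp add: sender_of_def comp_perm_R bb mk_def)
  hence ca: "compR \<rho> (Suc t) x = a" using permutes_inv_eq[OF P] by blast
  have "compR (rhoF \<rho>) (Suc t) x' = compR \<rho> k0 (\<rho> k0 (tau \<rho> (Bp \<rho> x')))"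
    unfolding comp_top[of "rhoF \<rho>"] by (simp add: comp_low rho_k0 Bp_inv)
  also have "tau \<rho> (Bp \<rho> x') = Bp \<rho> x" by (simp add: tau_def)
  also have "compR \<rho> k0 (\<rho> k0 (Bp \<rho> x)) = a" using ca unfolding comp_top[of \<rho>] by simp
  finally have "inv (compR (rhoF \<rho>) (Suc t)) a = x'" using permutes_inv_eq[OF P1] by blast
  thus ?thesis using inv_into_perm[OF P1 a] by (simp add: sender_of_def comp_perm_R bb mk_def phi_def)
qed


lemma view_phi:
  assumes ch: "CHAR('f) = 2" and b: "b \<in> BS v t" and kj: "k \<le> t" "j \<le> t" "k \<noteq> k0" "j \<noteq> j0"
  shows "viewAB v t (mk t (phi b) m) (k, j) = viewAB v t (mk t b m) (k, j)"
proof -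
  obtain S \<rho> \<omega> where bb: "b = (S, \<rho>, \<omega>)" by (cases b)
  let ?c = "mk t b m" and ?c' = "mk t (phi b) m"
  have b1: "phi b \<in> BS v t" by (rule phi_BS[OF b])
  have val: "valid v t ?c" "valid v t ?c'" using valid_mk b b1 by blast+
  have r: "\<rho> \<in> RS v t" using b bb by (simp add: BS_def)
  have pc: "perm ?c = \<rho>" "perm ?c' = rhoF \<rho>" by (simp_all add: bb phi_def)
  have modc: "modif ?c' l = modif ?c l" if "l \<noteq> k0" for l
    using that by (auto simp: phi_def fun_eq_iff omF_off)
  have pcs: "fst (snd b) = \<rho>" "fst (snd (phi b)) = rhoF \<rho>" by (simp_all add: bb phi_def)
  have modcs: "snd (snd (phi b)) l = snd (snd b) l" if "l \<noteq> k0" for l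
    using modc[OF that] by simp
  have modk0: "modif ?c' k0 = omF b k0" "modif ?c k0 = \<omega> k0" by (simp_all add: phi_def bb)
  have low: "sh ?c' K i j' = sh ?c K i j' + (if j' = j0 then dF \<rho> (compR \<rho> K i) else 0)" if "K \<le> k0" for K i j'
    using sh_phi_low[OF that, where b=b and ma=m and mb=m] by (simp add: bb)
  have shB: "shB (S, \<rho>, \<omega>) k0 = sh (mk t (S, \<rho>, \<omega>) m) k0" unfolding shB_def by (rule sh_mk_sec)
  have lev: "sh ?c' (Suc k0) i j' = sh ?c (Suc k0) i j'" if "i < v" "j' \<le> t" for i j'
  proof -
    have "sh ?c' (Suc k0) i j' = omF b k0 i j' + sh ?c' k0 (rhoF \<rho> k0 i) j'"
      by (simp only: sh.simps modk0 pc)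
    also have "omF b k0 i j' = \<omega> k0 i j' + (sh ?c k0 (\<rho> k0 i) j' - sh ?c k0 (rhoF \<rho> k0 i) j'
          - (if j' = j0 then dF \<rho> (compR \<rho> k0 (rhoF \<rho> k0 i)) else 0))"
      using omF_on[OF k0 that, of b] by (simp add: bb shB cong: if_cong)
    also have "sh ?c' k0 (rhoF \<rho> k0 i) j' = sh ?c k0 (rhoF \<rho> k0 i) j' + (if j' = j0 then dF \<rho> (compR \<rho> k0 (rhoF \<rho> k0 i)) else 0)"
      by (rule low) simp
    also have "sh ?c (Suc k0) i j' = \<omega> k0 i j' + sh ?c k0 (\<rho> k0 i) j'"
      by (simp only: sh.simps modk0 pc)
    ultimately show ?thesis by (simp add: algebra_simps)
  qed
  have high: "sh ?c' (Suc k0 + n) i j' = sh ?c (Suc k0 + n) i j'" if "Suc k0 + n \<le> Suc t" "i < v" "j' \<le> t" for n i j'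
  proof (rule sh_up[where K="Suc k0"])
    show "sh ?c' (Suc k0) i j' = sh ?c (Suc k0) i j'" if "i < v" "j' \<le> t" for i j' using lev that .
    show "perm ?c' l = perm ?c l \<and> modif ?c' l = modif ?c l \<and> perm ?c l permutes {..<v}"
      if "Suc k0 \<le> l" "l < Suc k0 + n" for l
      using that \<open>Suc k0 + n \<le> Suc t\<close> by (auto simp: pcs rho_other modcs intro: RS_perm[OF r])
  qed (use that in auto)
  have shk: "sh ?c' k i j = sh ?c k i j" if "i < v" for i
  proof (cases "k < k0")
    case True thus ?thesis using low[of k i j] kj by simp
  next
    case False
    hence "k = Suc k0 + (k - Suc k0)" using kj by simp
    thus ?thesis using high[of "k - Suc k0" i j] kj that by simp
  qed
  have cl: "cipher_level v t ?c' (Suc k) = cipher_level v t ?c (Suc k)"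
  proof (rule ext)
    fix a show "cipher_level v t ?c' (Suc k) a = cipher_level v t ?c (Suc k) a"
    proof (cases "a < v")
      case False thus ?thesis by (simp add: cipher_level_def bwd_high)
    next
      case True
      have f1: "cipher_level v t ?c' (Suc k) a = m (inv (sf ?c' (Suc k) (t - k)) a) + (\<Sum>j\<le>t. sh ?c' (Suc k) a j)"
        using cipher_level_formula[OF ch val(2), of "Suc k" a] True kj by (simp del: sh.simps)
      have f2: "cipher_level v t ?c (Suc k) a = m (inv (sf ?c (Suc k) (t - k)) a) + (\<Sum>j\<le>t. sh ?c (Suc k) a j)"
        using cipher_level_formula[OF ch val(1), of "Suc k" a] True kj by (simp del: sh.simps)
      show ?thesis
      proof (cases "k < k0")
        case False
        hence kk: "k0 < k" using kj by simp
        have "sf ?c' (Suc k) (t - k) = sf ?c (Suc k) (t - k)"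
          by (rule sf_cong) (use kk in \<open>simp add: pcs rho_other\<close>)
        moreover have "(\<Sum>j\<le>t. sh ?c' (Suc k) a j) = (\<Sum>j\<le>t. sh ?c (Suc k) a j)"
        proof (rule sum.cong[OF refl])
          fix j' assume "j' \<in> {..t}"
          moreover have "Suc k = Suc k0 + (k - k0)" using kk by simp
          ultimately show "sh ?c' (Suc k) a j' = sh ?c (Suc k) a j'"
            using high[of "k - k0" a j'] kj True by simp
        qed
        ultimately show ?thesis unfolding f1 f2 by simp
      next
        case True': True
        have kk: "Suc k \<le> k0" using True' by simp
        define y where "y = compR \<rho> (Suc k) a"
        have ylt: "y < v" unfolding y_def
          by (rule perm_lt[OF compR_permutes \<open>a < v\<close>]) (use kj in \<open>auto intro: RS_perm[OF r]\<close>)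
        have s1: "(\<Sum>j\<le>t. sh ?c' (Suc k) a j) = (\<Sum>j\<le>t. sh ?c (Suc k) a j) + dF \<rho> y"
          unfolding low[OF kk] y_def by (rule sum_shift[OF j0])
        have i1: "inv (sf ?c' (Suc k) (t - k)) a = inv (compR (rhoF \<rho>) (Suc t)) y"
          using inv_sf[OF val(2), of "Suc k" a] kj True by (simp add: comp_perm_R pcs comp_low[OF kk] y_def del: compR.simps)
        have i2: "inv (sf ?c (Suc k) (t - k)) a = inv (compR \<rho> (Suc t)) y"
          using inv_sf[OF val(1), of "Suc k" a] kj True by (simp add: comp_perm_R pcs y_def del: compR.simps)
        have dy: "dF \<rho> y = m (inv (compR \<rho> (Suc t)) y) - m (inv (compR (rhoF \<rho>) (Suc t)) y)"
          using ylt by (simp add: dF_def del: compR.simps)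
        show ?thesis unfolding f1 f2 s1 i1 i2 dy by (simp add: algebra_simps)
      qed
    qed
  qed
  show ?thesis
  proof (rule viewAB_eq)
    show "sh ?c' k i j = sh ?c k i j" if "i < v" for i using shk that .
    show "perm ?c' k = perm ?c k" using kj by (simp add: pcs rho_other)
    show "modif ?c' k = modif ?c k" by (rule modc[OF kj(3)])
    show "cipher_level v t ?c' (Suc k) = cipher_level v t ?c (Suc k)" by (rule cl)
  qed
qed


lemma anon_exists:
  assumes ch: "CHAR('f) = 2" and C: "C \<subseteq> {..t} \<times> {..t}" and Ck: "\<forall>s\<in>C. fst s \<noteq> k0"
    and Cj: "\<forall>s\<in>C. snd s \<noteq> j0" and a: "a < v"
  shows "\<exists>\<phi>. bij_betw \<phi> (BS v t) (BS v t)
    \<and> (\<forall>b\<in>BS v t. coalition_view C (viewAB v t (mk t (\<phi> b) m)) = coalition_view C (viewAB v t (mk t b m)))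
    \<and> (\<forall>b\<in>BS v t. coalition_view C (viewA v t (mk t (\<phi> b) m)) = coalition_view C (viewA v t (mk t b m)))
    \<and> (\<forall>b\<in>BS v t. sender_of v t (mk t b m) a = x \<longrightarrow> sender_of v t (mk t (\<phi> b) m) a = x')"
proof (intro exI[of _ phi] conjI ballI impI)
  show "bij_betw phi (BS v t) (BS v t)" by (rule phi_bij)
  fix b :: "(nat\<Rightarrow>nat\<Rightarrow>'f) \<times> (nat\<Rightarrow>nat\<Rightarrow>nat) \<times> (nat\<Rightarrow>nat\<Rightarrow>nat\<Rightarrow>'f)"
  assume b: "b \<in> BS v t"
  have ab: "viewAB v t (mk t (phi b) m) s = viewAB v t (mk t b m) s" if "s \<in> C" for s
  proof -
    obtain k j where s: "s = (k, j)" by (cases s)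
    have "k \<le> t" "j \<le> t" "k \<noteq> k0" "j \<noteq> j0" using that C Ck Cj s by auto
    thus ?thesis unfolding s by (rule view_phi[OF ch b])
  qed
  show "coalition_view C (viewAB v t (mk t (phi b) m)) = coalition_view C (viewAB v t (mk t b m))"
    by (rule cview_eq) (rule ab)
  show "coalition_view C (viewA v t (mk t (phi b) m)) = coalition_view C (viewA v t (mk t b m))"
  proof (rule cview_eq)
    fix s assume "s \<in> C"
    from ab[OF this] show "viewA v t (mk t (phi b) m) s = viewA v t (mk t b m) s"
      by (simp add: viewAB_def)
  qed
  assume "sender_of v t (mk t b m) a = x"
  thus "sender_of v t (mk t (phi b) m) a = x'" by (rule sender_phi[OF b a])
qed

end

lemma sender_lt: "b \<in> BS v t \<Longrightarrow> a < v \<Longrightarrow> sender_of v t (mk t b m) a < v"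
  unfolding sender_of_def
  using inv_into_perm[OF valid_comp[OF valid_mk order_refl]] inv_perm_lt[OF valid_comp[OF valid_mk order_refl]]
  by metis

lemma claim_anon:
  fixes M :: "(nat \<Rightarrow> 'f::{field,finite}) pmf"
  assumes ch: "CHAR('f) = 2" and C: "C \<subseteq> {..t} \<times> {..t}" and k0: "k0 \<le> t" and j0: "j0 \<le> t"
    and Ck: "\<forall>s\<in>C. fst s \<noteq> k0" and Cj: "\<forall>s\<in>C. snd s \<noteq> j0" and a: "a < v"
  shows "view_useless (coins_pmf v t M) (\<lambda>c. coalition_view C (viewAB v t c)) (\<lambda>c. sender_of v t c a)"
    and "view_useless (coins_pmf v t M) (\<lambda>c. coalition_view C (viewA v t c)) (\<lambda>c. sender_of v t c a)"
proof -
  show "view_useless (coins_pmf v t M) (\<lambda>c. coalition_view C (viewAB v t c)) (\<lambda>c. sender_of v t c a)"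
  proof (rule vu_from_mix)
    fix m :: "nat \<Rightarrow> 'f"
    show "map_pmf (\<lambda>b. (coalition_view C (viewAB v t (mk t b m)), sender_of v t (mk t b m) a)) (pmf_of_set (BS v t))
      = pair_pmf (map_pmf (\<lambda>b. coalition_view C (viewAB v t (mk t b m))) (pmf_of_set (BS v t))) (pmf_of_set {..<v})"
    proof (rule sym_indep)
      fix x x' assume "x \<in> {..<v}" "x' \<in> {..<v}"
      hence xx: "x < v" "x' < v" by auto
      show "\<exists>\<phi>. bij_betw \<phi> (BS v t) (BS v t) \<and> (\<forall>b\<in>BS v t. coalition_view C (viewAB v t (mk t (\<phi> b) m)) = coalition_view C (viewAB v t (mk t b m)))
         \<and> (\<forall>b\<in>BS v t. sender_of v t (mk t b m) a = x \<longrightarrow> sender_of v t (mk t (\<phi> b) m) a = x')"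
        using anon_exists[OF k0 j0 xx ch C Ck Cj a, of m] by blast
    qed (use a sender_lt in \<open>auto simp: finite_BS BS_ne\<close>)
  qed
  show "view_useless (coins_pmf v t M) (\<lambda>c. coalition_view C (viewA v t c)) (\<lambda>c. sender_of v t c a)"
  proof (rule vu_from_mix)
    fix m :: "nat \<Rightarrow> 'f"
    show "map_pmf (\<lambda>b. (coalition_view C (viewA v t (mk t b m)), sender_of v t (mk t b m) a)) (pmf_of_set (BS v t))
      = pair_pmf (map_pmf (\<lambda>b. coalition_view C (viewA v t (mk t b m))) (pmf_of_set (BS v t))) (pmf_of_set {..<v})"
    proof (rule sym_indep)
      fix x x' assume "x \<in> {..<v}" "x' \<in> {..<v}"
      hence xx: "x < v" "x' < v" by auto
      show "\<exists>\<phi>. bij_betw \<phi> (BS v t) (BS v t) \<and> (\<forall>b\<in>BS v t. coalition_view C (viewA v t (mk t (\<phi> b) m)) = coalition_view C (viewA v t (mk t b m)))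
         \<and> (\<forall>b\<in>BS v t. sender_of v t (mk t b m) a = x \<longrightarrow> sender_of v t (mk t (\<phi> b) m) a = x')"
        using anon_exists[OF k0 j0 xx ch C Ck Cj a, of m] by blast
    qed (use a sender_lt in \<open>auto simp: finite_BS BS_ne\<close>)
  qed
qed

theorem theorem1:
  fixes v t :: nat and Mdist :: "(nat \<Rightarrow> 'f::{finite,field}) pmf"
  assumes "CHAR('f) = 2"
  shows
    \<comment> \<open>perfect reliability\<close>
    "(AE c in measure_pmf (coins_pmf v t Mdist).
        \<forall>a<v. received v t c a = secret c (sender_of v t c a))
     \<and> (\<forall>C. C \<subseteq> {..t} \<times> {..t} \<and> card C \<le> t \<longrightarrow>
        \<comment> \<open>perfect privacy of the pads (Phase A)\<close>
        (\<forall>a<v. view_useless (coins_pmf v t Mdist)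
                  (\<lambda>c. coalition_view C (viewA v t c)) (\<lambda>c. pad c a))
      \<and> (\<forall>i<v. view_useless (coins_pmf v t Mdist)
                  (\<lambda>c. coalition_view C (viewA v t c)) (\<lambda>c. sender_pad t c i))
        \<comment> \<open>perfect privacy of the senders' secrets (complete view)\<close>
      \<and> (\<forall>i<v. view_useless (coins_pmf v t Mdist)
                  (\<lambda>c. coalition_view C (viewAB v t c)) (\<lambda>c. secret c i))
        \<comment> \<open>perfect anonymity: who receives pad a / who sent the message R gets in slot a\<close>
      \<and> (\<forall>a<v. view_useless (coins_pmf v t Mdist)
                  (\<lambda>c. coalition_view C (viewA v t c)) (\<lambda>c. sender_of v t c a))
      \<and> (\<forall>a<v. view_useless (coins_pmf v t Mdist)
                  (\<lambda>c. coalition_view C (viewAB v t c)) (\<lambda>c. sender_of v t c a)))"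
proof -
  have R: "AE c in measure_pmf (coins_pmf v t Mdist). \<forall>a<v. received v t c a = secret c (sender_of v t c a)"
    by (rule reliability[OF assms])
  have "\<forall>C. C \<subseteq> {..t} \<times> {..t} \<and> card C \<le> t \<longrightarrow>
        (\<forall>a<v. view_useless (coins_pmf v t Mdist) (\<lambda>c. coalition_view C (viewA v t c)) (\<lambda>c. pad c a))
      \<and> (\<forall>i<v. view_useless (coins_pmf v t Mdist) (\<lambda>c. coalition_view C (viewA v t c)) (\<lambda>c. sender_pad t c i))
      \<and> (\<forall>i<v. view_useless (coins_pmf v t Mdist) (\<lambda>c. coalition_view C (viewAB v t c)) (\<lambda>c. secret c i))
      \<and> (\<forall>a<v. view_useless (coins_pmf v t Mdist) (\<lambda>c. coalition_view C (viewA v t c)) (\<lambda>c. sender_of v t c a))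
      \<and> (\<forall>a<v. view_useless (coins_pmf v t Mdist) (\<lambda>c. coalition_view C (viewAB v t c)) (\<lambda>c. sender_of v t c a))"
  proof (intro allI impI)
    fix C :: "(nat \<times> nat) set"
    assume C: "C \<subseteq> {..t} \<times> {..t} \<and> card C \<le> t"
    obtain k0 where k0: "k0 \<le> t" "\<forall>s\<in>C. fst s \<noteq> k0" using exists_free(1)[of C t] C by blast
    obtain j0 where j0: "j0 \<le> t" "\<forall>s\<in>C. snd s \<noteq> j0" using exists_free(2)[of C t] C by blast
    have Cs: "C \<subseteq> {..t} \<times> {..t}" using C by blast
    have h1: "\<forall>a<v. view_useless (coins_pmf v t Mdist) (\<lambda>c. coalition_view C (viewA v t c)) (\<lambda>c. pad c a)"
      using claim_pad[OF j0] by blast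
    have h2: "\<forall>i<v. view_useless (coins_pmf v t Mdist) (\<lambda>c. coalition_view C (viewA v t c)) (\<lambda>c. sender_pad t c i)"
      using claim_sender_pad[OF j0] by blast
    have h3: "\<forall>i<v. view_useless (coins_pmf v t Mdist) (\<lambda>c. coalition_view C (viewAB v t c)) (\<lambda>c. secret c i)"
      using claim_secret[OF assms j0 Cs] by blast
    have h4: "\<forall>a<v. view_useless (coins_pmf v t Mdist) (\<lambda>c. coalition_view C (viewA v t c)) (\<lambda>c. sender_of v t c a)"
      using claim_anon(2)[OF assms Cs k0(1) j0(1) k0(2) j0(2)] by blast
    have h5: "\<forall>a<v. view_useless (coins_pmf v t Mdist) (\<lambda>c. coalition_view C (viewAB v t c)) (\<lambda>c. sender_of v t c a)"
      using claim_anon(1)[OF assms Cs k0(1) j0(1) k0(2) j0(2)] by blast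
    show "(\<forall>a<v. view_useless (coins_pmf v t Mdist) (\<lambda>c. coalition_view C (viewA v t c)) (\<lambda>c. pad c a))
      \<and> (\<forall>i<v. view_useless (coins_pmf v t Mdist) (\<lambda>c. coalition_view C (viewA v t c)) (\<lambda>c. sender_pad t c i))
      \<and> (\<forall>i<v. view_useless (coins_pmf v t Mdist) (\<lambda>c. coalition_view C (viewAB v t c)) (\<lambda>c. secret c i))
      \<and> (\<forall>a<v. view_useless (coins_pmf v t Mdist) (\<lambda>c. coalition_view C (viewA v t c)) (\<lambda>c. sender_of v t c a))
      \<and> (\<forall>a<v. view_useless (coins_pmf v t Mdist) (\<lambda>c. coalition_view C (viewAB v t c)) (\<lambda>c. sender_of v t c a))"
      using h1 h2 h3 h4 h5 by (intro conjI)
  qed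
  with R show ?thesis by (intro conjI)
qed

end
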